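(* Let $\mathbb{K}\in\{\mathbb{R},\mathbb{C}\}$, $B$ a commutative Banach algebra over $\mathbb{K}$, $(\omega_k)_{k\in\mathbb{N}}$ a convex growth family and $((\mathcal{H},\Sigma),(\omega_k)_k)$ a control pair. Consider the locally convex algebra $(\ell^\infty_{\rightarrow}(\mathcal{H},B),\star)$ and its commutator Lie algebra with $[\varphi,\psi]=\varphi\star\psi-\psi\star\varphi$. (1) The set $G_{\mathrm{ctr}}(\mathcal{H},B)$ of controlled characters is a closed subgroup of the unit group of $(\ell^\infty_{\rightarrow}(\mathcal{H},B),\star)$; inversion in this group is $\phi\mapsto\phi\circ S$ and the unit element is $x\mapsto\epsilon(x)1_B$. (2) The set $\mathfrak{g}_{\mathrm{ctr}}(\mathcal{H},B)$ of controlled infinitesimal characters is a closed Lie subalgebra of $(\ell^\infty_{\rightarrow}(\mathcal{H},B),[\cdot,\cdot])$.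
   Context: A growth family is a family $(\omega_k)_{k\in\mathbb{N}}$ of functions $\omega_k\colon\mathbb{N}_0\to\mathbb{N}$ with (W1) $\omega_k(0)=1$, $\omega_k(n)\le\omega_{k+1}(n)$; (W2) $\omega_k(n)\omega_k(m)\le\omega_k(n+m)$; (W3) for every $k_1$ there is $k_2\ge k_1$ with $\omega_{k_2}(n)\ge2^n\omega_{k_1}(n)$ for all $n$; convex means: for each $k_1$ one can choose such $k_2$ so that additionally for every $k_3\ge k_2$ some $\alpha\in]0,1[$ satisfies $\omega_{k_1}(n)^\alpha\omega_{k_3}(n)^{1-\alpha}\le\omega_{k_2}(n)$ for all $n$. For a set $J$ graded by $|\cdot|\colon J\to\mathbb{N}_0$: $\ell^1_{\leftarrow}(J)=\bigcap_k\{\sum c_\tau\tau:\sum|c_\tau|\omega_k(|\tau|)<\infty\}$ (projective limit topology); $\ell^\infty_{\rightarrow}(J,B)=\bigcup_k\{f\colon J\to B:\sup_\tau\|f(\tau)\|/\omega_k(|\tau|)<\infty\}$ (locally convex direct limit of these Banach spaces). A commutative Banach algebra: unital commutative, complete submultiplicative norm, $\|1_B\|=1$. A combinatorial Hopf algebra $(\mathcal{H},\Sigma)$: graded connected Hopf algebra over $\mathbb{K}$ (multiplication $m$, coproduct $\Delta$, counit $\epsilon$, antipode $S$) with $\Sigma\subseteq\mathcal{H}$ such that $\mathcal{H}$ is as an algebra, via a fixed isomorphism, $\mathbb{K}[\Sigma]$ or $\mathbb{K}\langle\Sigma\rangle$. With $M$ the free commutative monoid resp. free monoid on $\Sigma$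 (degree-additive grading), $\mathcal{H}=\mathbb{K}^{(M)}$, $\mathcal{H}\otimes\mathcal{H}=\mathbb{K}^{(M\times M)}$ with $|(\mu,\sigma)|=|\mu|+|\sigma|$. Control pair: $\Delta$ and $S$ extend to continuous linear maps $\ell^1_{\leftarrow}(M)\to\ell^1_{\leftarrow}(M\times M)$ resp. $\ell^1_{\leftarrow}(M)\to\ell^1_{\leftarrow}(M)$. A linear $\phi\colon\mathcal{H}\to B$ is controlled if $\phi|_M\in\ell^\infty_{\rightarrow}(M,B)$; $\ell^\infty_{\rightarrow}(\mathcal{H},B)$ denotes these maps, topologised as $\ell^\infty_{\rightarrow}(M,B)$. Convolution: $\phi\star\psi=m_B\circ(\phi\otimes\psi)\circ\Delta$. A character is a unital algebra homomorphism $\mathcal{H}\to B$; an infinitesimal character is a linear $\phi$ with $\phi(ab)=\phi(a)\epsilon(b)+\epsilon(a)\phi(b)$. Controlled (infinitesimal) characters are those that are controlled linear maps. *)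

theory Defs
  imports "HOL-Analysis.Analysis" "HOL-Library.Multiset"
begin

definition fsupp :: "('a \<Rightarrow> 'k::zero) \<Rightarrow> 'a set" where
  "fsupp f = {x. f x \<noteq> 0}"

definition finsupp :: "('a \<Rightarrow> 'k::zero) \<Rightarrow> bool" where
  "finsupp f \<longleftrightarrow> finite (fsupp f)"

definition hbasis :: "'a \<Rightarrow> 'a \<Rightarrow> 'k::{zero,one}" where
  "hbasis a = (\<lambda>b. if b = a then 1 else 0)"

definition lin_ext :: "('a \<Rightarrow> 'b \<Rightarrow> 'k::comm_semiring_1) \<Rightarrow> ('a \<Rightarrow> 'k) \<Rightarrow> 'b \<Rightarrow> 'k" where
  "lin_ext F x = (\<lambda>v. \<Sum>a\<in>fsupp x. x a * F a v)"

definition malg_mult :: "('a \<Rightarrow> 'a \<Rightarrow> 'a) \<Rightarrow> ('a \<Rightarrow> 'k::comm_semiring_1) \<Rightarrow> ('a \<Rightarrow> 'k) \<Rightarrow> 'a \<Rightarrow> 'k" where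
  "malg_mult mul x y =
     (\<lambda>p. \<Sum>(a,b)\<in>{(a,b). a \<in> fsupp x \<and> b \<in> fsupp y \<and> mul a b = p}. x a * y b)"

definition pair_mult :: "'m::times \<times> 'm \<Rightarrow> 'm \<times> 'm \<Rightarrow> 'm \<times> 'm" where
  "pair_mult p q = (fst p * fst q, snd p * snd q)"

definition free_monoid_on :: "'m::monoid_mult set \<Rightarrow> bool" where
  "free_monoid_on Sig \<longleftrightarrow> (\<forall>m. \<exists>!w. set w \<subseteq> Sig \<and> prod_list w = m)"

definition free_comm_monoid_on :: "'m::monoid_mult set \<Rightarrow> bool" where
  "free_comm_monoid_on Sig \<longleftrightarrow>
     (\<forall>a b::'m. a * b = b * a) \<and>
     (\<forall>m. \<exists>w. set w \<subseteq> Sig \<and> prod_list w = m) \<and>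
     (\<forall>w w'. set w \<subseteq> Sig \<longrightarrow> set w' \<subseteq> Sig \<longrightarrow> prod_list w = prod_list w' \<longrightarrow> mset w = mset w')"

text \<open>The algebra structure of H is the monoid algebra of M (product malg_mult (*), unit hbasis 1).
  Coproduct, counit and antipode are given by their values on the basis M.
  H \<otimes> H = K^(M \<times> M) with the componentwise monoid structure.\<close>

definition graded_connected_hopf ::
  "('m::monoid_mult \<Rightarrow> nat) \<Rightarrow> ('m \<Rightarrow> 'm \<times> 'm \<Rightarrow> 'k::field) \<Rightarrow> ('m \<Rightarrow> 'k) \<Rightarrow> ('m \<Rightarrow> 'm \<Rightarrow> 'k) \<Rightarrow> bool"
  where
  "graded_connected_hopf deg Delta eps S \<longleftrightarrow>
     \<comment> \<open>degree-additive grading, connectedness\<close>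
     deg 1 = 0 \<and> (\<forall>a b. deg (a * b) = deg a + deg b) \<and>
     (\<forall>\<mu>. deg \<mu> = 0 \<longrightarrow> \<mu> = 1) \<and>
     \<comment> \<open>coproduct and antipode take values in H \<otimes> H resp. H\<close>
     (\<forall>\<mu>. finsupp (Delta \<mu>)) \<and> (\<forall>\<mu>. finsupp (S \<mu>)) \<and>
     \<comment> \<open>coproduct and counit are graded\<close>
     (\<forall>\<mu> a b. Delta \<mu> (a, b) \<noteq> 0 \<longrightarrow> deg a + deg b = deg \<mu>) \<and>
     (\<forall>\<mu>. 0 < deg \<mu> \<longrightarrow> eps \<mu> = 0) \<and>
     \<comment> \<open>coproduct and counit are algebra morphisms\<close>
     Delta 1 = hbasis (1, 1) \<and>
     (\<forall>\<mu> \<nu>. Delta (\<mu> * \<nu>) = malg_mult pair_mult (Delta \<mu>) (Delta \<nu>)) \<and>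
     eps 1 = 1 \<and> (\<forall>\<mu> \<nu>. eps (\<mu> * \<nu>) = eps \<mu> * eps \<nu>) \<and>
     \<comment> \<open>coassociativity: (Delta \<otimes> id) Delta = (id \<otimes> Delta) Delta\<close>
     (\<forall>\<mu> x y z. (\<Sum>a\<in>{a. Delta \<mu> (a, z) \<noteq> 0}. Delta \<mu> (a, z) * Delta a (x, y))
                = (\<Sum>b\<in>{b. Delta \<mu> (x, b) \<noteq> 0}. Delta \<mu> (x, b) * Delta b (y, z))) \<and>
     \<comment> \<open>counit: (eps \<otimes> id) Delta = id = (id \<otimes> eps) Delta\<close>
     (\<forall>\<mu> \<nu>. (\<Sum>a\<in>{a. Delta \<mu> (a, \<nu>) \<noteq> 0}. eps a * Delta \<mu> (a, \<nu>)) = hbasis \<mu> \<nu>) \<and>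
     (\<forall>\<mu> \<nu>. (\<Sum>b\<in>{b. Delta \<mu> (\<nu>, b) \<noteq> 0}. Delta \<mu> (\<nu>, b) * eps b) = hbasis \<mu> \<nu>) \<and>
     \<comment> \<open>antipode: m (S \<otimes> id) Delta = \<eta> eps = m (id \<otimes> S) Delta\<close>
     (\<forall>\<mu>. lin_ext (\<lambda>(a, b). malg_mult (*) (S a) (hbasis b)) (Delta \<mu>) = (\<lambda>\<nu>. eps \<mu> * hbasis 1 \<nu>)) \<and>
     (\<forall>\<mu>. lin_ext (\<lambda>(a, b). malg_mult (*) (hbasis a) (S b)) (Delta \<mu>) = (\<lambda>\<nu>. eps \<mu> * hbasis 1 \<nu>))"

text \<open>Combinatorial Hopf algebra: H is (via the identification H = K^(M)) the polynomial algebra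
  K[Sig] (M free commutative monoid on Sig) or the free algebra K<Sig> (M free monoid on Sig).\<close>
definition combinatorial_hopf ::
  "('m::monoid_mult \<Rightarrow> nat) \<Rightarrow> 'm set \<Rightarrow> ('m \<Rightarrow> 'm \<times> 'm \<Rightarrow> 'k::field) \<Rightarrow> ('m \<Rightarrow> 'k) \<Rightarrow> ('m \<Rightarrow> 'm \<Rightarrow> 'k) \<Rightarrow> bool"
  where
  "combinatorial_hopf deg Sig Delta eps S \<longleftrightarrow>
     (free_comm_monoid_on Sig \<or> free_monoid_on Sig) \<and> graded_connected_hopf deg Delta eps S"

definition growth_family :: "(nat \<Rightarrow> nat \<Rightarrow> nat) \<Rightarrow> bool" where
  "growth_family \<omega> \<longleftrightarrow>
     (\<forall>k n. 1 \<le> \<omega> k n) \<and>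
     (\<forall>k. \<omega> k 0 = 1) \<and> (\<forall>k n. \<omega> k n \<le> \<omega> (Suc k) n) \<and>
     (\<forall>k n m. \<omega> k n * \<omega> k m \<le> \<omega> k (n + m)) \<and>
     (\<forall>k1. \<exists>k2\<ge>k1. \<forall>n. 2 ^ n * \<omega> k1 n \<le> \<omega> k2 n)"

definition convex_growth_family :: "(nat \<Rightarrow> nat \<Rightarrow> nat) \<Rightarrow> bool" where
  "convex_growth_family \<omega> \<longleftrightarrow> growth_family \<omega> \<and>
     (\<forall>k1. \<exists>k2\<ge>k1. (\<forall>n. 2 ^ n * \<omega> k1 n \<le> \<omega> k2 n) \<and>
        (\<forall>k3\<ge>k2. \<exists>\<alpha>::real. 0 < \<alpha> \<and> \<alpha> < 1 \<and>
           (\<forall>n. real (\<omega> k1 n) powr \<alpha> * real (\<omega> k3 n) powr (1 - \<alpha>) \<le> real (\<omega> k2 n))))"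

definition l1_space :: "(nat \<Rightarrow> nat \<Rightarrow> nat) \<Rightarrow> ('j \<Rightarrow> nat) \<Rightarrow> ('j \<Rightarrow> 'k::real_normed_vector) set" where
  "l1_space \<omega> dg = {c. \<forall>k. (\<lambda>t. norm (c t) * real (\<omega> k (dg t))) summable_on UNIV}"

definition l1_seminorm :: "(nat \<Rightarrow> nat \<Rightarrow> nat) \<Rightarrow> ('j \<Rightarrow> nat) \<Rightarrow> nat \<Rightarrow> ('j \<Rightarrow> 'k::real_normed_vector) \<Rightarrow> real" where
  "l1_seminorm \<omega> dg k c = (\<Sum>\<^sub>\<infinity>t. norm (c t) * real (\<omega> k (dg t)))"

text \<open>Open sets of the projective limit topology (initial topology of the weighted l^1 norms).\<close>
definition l1_open :: "(nat \<Rightarrow> nat \<Rightarrow> nat) \<Rightarrow> ('j \<Rightarrow> nat) \<Rightarrow> ('j \<Rightarrow> 'k::real_normed_vector) set \<Rightarrow> bool" where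
  "l1_open \<omega> dg V \<longleftrightarrow>  V \<subseteq> l1_space \<omega> dg \<and>
     (\<forall>x\<in>V. \<exists>F e. finite F \<and> 0 < e \<and>
        {y \<in> l1_space \<omega> dg. \<forall>k\<in>F. l1_seminorm \<omega> dg k (y - x) < e} \<subseteq> V)"

definition l1_cont_linear ::
  "(nat \<Rightarrow> nat \<Rightarrow> nat) \<Rightarrow> ('i \<Rightarrow> nat) \<Rightarrow> ('j \<Rightarrow> nat) \<Rightarrow> (('i \<Rightarrow> 'k::real_normed_field) \<Rightarrow> ('j \<Rightarrow> 'k)) \<Rightarrow> bool"
  where
  "l1_cont_linear \<omega> dg1 dg2 T \<longleftrightarrow>
     (\<forall>c\<in>l1_space \<omega> dg1. T c \<in> l1_space \<omega> dg2) \<and>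
     (\<forall>a b c d. c \<in> l1_space \<omega> dg1 \<longrightarrow> d \<in> l1_space \<omega> dg1 \<longrightarrow>
        T (\<lambda>t. a * c t + b * d t) = (\<lambda>s. a * T c s + b * T d s)) \<and>
     (\<forall>V. l1_open \<omega> dg2 V \<longrightarrow> l1_open \<omega> dg1 {c \<in> l1_space \<omega> dg1. T c \<in> V})"

definition control_pair ::
  "(nat \<Rightarrow> nat \<Rightarrow> nat) \<Rightarrow> ('m::monoid_mult \<Rightarrow> nat) \<Rightarrow> ('m \<Rightarrow> 'm \<times> 'm \<Rightarrow> 'k::real_normed_field) \<Rightarrow> ('m \<Rightarrow> 'm \<Rightarrow> 'k) \<Rightarrow> bool"
  where
  "control_pair \<omega> deg Delta S \<longleftrightarrow>
     (\<exists>T. l1_cont_linear \<omega> deg (\<lambda>p. deg (fst p) + deg (snd p)) T \<and>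
          (\<forall>x. finsupp x \<longrightarrow> T x = lin_ext Delta x)) \<and>
     (\<exists>T. l1_cont_linear \<omega> deg deg T \<and> (\<forall>x. finsupp x \<longrightarrow> T x = lin_ext S x))"

definition R_or_C :: "'k::real_normed_field itself \<Rightarrow> bool" where
  "R_or_C _ \<longleftrightarrow>
     (\<exists>h::'k \<Rightarrow> real. bij h \<and> (\<forall>x y. h (x + y) = h x + h y \<and> h (x * y) = h x * h y) \<and>
         (\<forall>x. norm (h x) = norm x)) \<or>
     (\<exists>h::'k \<Rightarrow> complex. bij h \<and> (\<forall>x y. h (x + y) = h x + h y \<and> h (x * y) = h x * h y) \<and>
         (\<forall>x. norm (h x) = norm x))"

text \<open>B (a complete normed unital commutative ring with submultiplicative norm and norm 1 = 1,
  given by the type class) is a K-algebra via the structure map iota, and its norm is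
  K-homogeneous.\<close>
definition banach_algebra_over :: "('k::real_normed_field \<Rightarrow> 'b::{comm_ring_1,real_normed_algebra_1,banach}) \<Rightarrow> bool" where
  "banach_algebra_over \<iota> \<longleftrightarrow>
     \<iota> 1 = 1 \<and> (\<forall>a b. \<iota> (a + b) = \<iota> a + \<iota> b) \<and> (\<forall>a b. \<iota> (a * b) = \<iota> a * \<iota> b) \<and>
     (\<forall>a x. norm (\<iota> a * x) = norm a * norm x)"

section \<open>Controlled linear maps H \<rightarrow> B (identified with their restriction to M)\<close>

definition linf_step :: "(nat \<Rightarrow> nat \<Rightarrow> nat) \<Rightarrow> ('j \<Rightarrow> nat) \<Rightarrow> nat \<Rightarrow> ('j \<Rightarrow> 'b::real_normed_vector) set" where
  "linf_step \<omega> dg k = {f. \<exists>C. \<forall>t. norm (f t) \<le> C * real (\<omega> k (dg t))}"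

definition linf_norm :: "(nat \<Rightarrow> nat \<Rightarrow> nat) \<Rightarrow> ('j \<Rightarrow> nat) \<Rightarrow> nat \<Rightarrow> ('j \<Rightarrow> 'b::real_normed_vector) \<Rightarrow> real" where
  "linf_norm \<omega> dg k f = (SUP t. norm (f t) / real (\<omega> k (dg t)))"

definition linf :: "(nat \<Rightarrow> nat \<Rightarrow> nat) \<Rightarrow> ('j \<Rightarrow> nat) \<Rightarrow> ('j \<Rightarrow> 'b::real_normed_vector) set" where
  "linf \<omega> dg = (\<Union>k. linf_step \<omega> dg k)"

definition abs_convex :: "('k::real_normed_field \<Rightarrow> 'b::ring) \<Rightarrow> ('j \<Rightarrow> 'b) set \<Rightarrow> bool" where
  "abs_convex \<iota> U \<longleftrightarrow>
     (\<forall>u\<in>U. \<forall>v\<in>U. \<forall>a b. norm a + norm b \<le> 1 \<longrightarrow> (\<lambda>t. \<iota> a * u t + \<iota> b * v t) \<in> U)"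

text \<open>Open sets of the locally convex direct limit topology of the Banach spaces linf_step k:
  a base of 0-neighbourhoods consists of the absolutely convex sets whose intersection with
  every step is a 0-neighbourhood of that step.\<close>
definition ind_open :: "('k::real_normed_field \<Rightarrow> 'b::{comm_ring_1,real_normed_algebra_1,banach}) \<Rightarrow>
     (nat \<Rightarrow> nat \<Rightarrow> nat) \<Rightarrow> ('j \<Rightarrow> nat) \<Rightarrow> ('j \<Rightarrow> 'b) set \<Rightarrow> bool" where
  "ind_open \<iota> \<omega> dg V \<longleftrightarrow>  V \<subseteq> linf \<omega> dg \<and>
     (\<forall>x\<in>V. \<exists>U. U \<subseteq> linf \<omega> dg \<and> abs_convex \<iota> U \<and>
        (\<forall>k. \<exists>e>0. {f \<in> linf_step \<omega> dg k. linf_norm \<omega> dg k f < e} \<subseteq> U) \<and>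
        (\<forall>u\<in>U. (\<lambda>t. x t + u t) \<in> V))"

definition hconv :: "('k \<Rightarrow> 'b::comm_ring_1) \<Rightarrow> ('m \<Rightarrow> 'm \<times> 'm \<Rightarrow> 'k::zero) \<Rightarrow> ('m \<Rightarrow> 'b) \<Rightarrow> ('m \<Rightarrow> 'b) \<Rightarrow> 'm \<Rightarrow> 'b" where
  "hconv \<iota> Delta \<phi> \<psi> = (\<lambda>\<mu>. \<Sum>p\<in>fsupp (Delta \<mu>). \<iota> (Delta \<mu> p) * \<phi> (fst p) * \<psi> (snd p))"

definition hunit :: "('k \<Rightarrow> 'b::comm_ring_1) \<Rightarrow> ('m \<Rightarrow> 'k) \<Rightarrow> 'm \<Rightarrow> 'b" where
  "hunit \<iota> eps = (\<lambda>\<mu>. \<iota> (eps \<mu>) * 1)"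

definition comp_S :: "('k \<Rightarrow> 'b::comm_ring_1) \<Rightarrow> ('m \<Rightarrow> 'm \<Rightarrow> 'k::zero) \<Rightarrow> ('m \<Rightarrow> 'b) \<Rightarrow> 'm \<Rightarrow> 'b" where
  "comp_S \<iota> S \<phi> = (\<lambda>\<mu>. \<Sum>\<nu>\<in>fsupp (S \<mu>). \<iota> (S \<mu> \<nu>) * \<phi> \<nu>)"

definition lin_map :: "('k::zero \<Rightarrow> 'b::comm_ring_1) \<Rightarrow> ('m \<Rightarrow> 'b) \<Rightarrow> ('m \<Rightarrow> 'k) \<Rightarrow> 'b" where
  "lin_map \<iota> \<phi> x = (\<Sum>\<mu>\<in>fsupp x. \<iota> (x \<mu>) * \<phi> \<mu>)"

definition eps_lin :: "('m \<Rightarrow> 'k::comm_semiring_1) \<Rightarrow> ('m \<Rightarrow> 'k) \<Rightarrow> 'k" where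
  "eps_lin eps x = (\<Sum>\<mu>\<in>fsupp x. x \<mu> * eps \<mu>)"

definition is_character :: "('k::comm_semiring_1 \<Rightarrow> 'b::comm_ring_1) \<Rightarrow> ('m::monoid_mult \<Rightarrow> 'b) \<Rightarrow> bool" where
  "is_character \<iota> \<phi> \<longleftrightarrow>
     lin_map \<iota> \<phi> (hbasis 1) = 1 \<and>
     (\<forall>x y. finsupp x \<longrightarrow> finsupp y \<longrightarrow>
        lin_map \<iota> \<phi> (malg_mult (*) x y) = lin_map \<iota> \<phi> x * lin_map \<iota> \<phi> y)"

definition is_inf_character :: "('k::comm_semiring_1 \<Rightarrow> 'b::comm_ring_1) \<Rightarrow> ('m::monoid_mult \<Rightarrow> 'k) \<Rightarrow> ('m \<Rightarrow> 'b) \<Rightarrow> bool" where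
  "is_inf_character \<iota> eps \<phi> \<longleftrightarrow>
     (\<forall>x y. finsupp x \<longrightarrow> finsupp y \<longrightarrow>
        lin_map \<iota> \<phi> (malg_mult (*) x y)
          = lin_map \<iota> \<phi> x * \<iota> (eps_lin eps y) + \<iota> (eps_lin eps x) * lin_map \<iota> \<phi> y)"

definition ctr_units ::
  "('k::real_normed_field \<Rightarrow> 'b::{comm_ring_1,real_normed_algebra_1,banach}) \<Rightarrow> (nat \<Rightarrow> nat \<Rightarrow> nat) \<Rightarrow> ('m \<Rightarrow> nat) \<Rightarrow>
   ('m \<Rightarrow> 'm \<times> 'm \<Rightarrow> 'k) \<Rightarrow> ('m \<Rightarrow> 'k) \<Rightarrow> ('m \<Rightarrow> 'b) set" where
  "ctr_units \<iota> \<omega> deg Delta eps =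
     {\<phi> \<in> linf \<omega> deg. \<exists>\<psi>\<in>linf \<omega> deg.
        hconv \<iota> Delta \<phi> \<psi> = hunit \<iota> eps \<and> hconv \<iota> Delta \<psi> \<phi> = hunit \<iota> eps}"

definition ctr_chars ::
  "('k::real_normed_field \<Rightarrow> 'b::{comm_ring_1,real_normed_algebra_1,banach}) \<Rightarrow> (nat \<Rightarrow> nat \<Rightarrow> nat) \<Rightarrow> ('m::monoid_mult \<Rightarrow> nat) \<Rightarrow> ('m \<Rightarrow> 'b) set" where
  "ctr_chars \<iota> \<omega> deg = {\<phi> \<in> linf \<omega> deg. is_character \<iota> \<phi>}"

definition ctr_inf_chars ::
  "('k::real_normed_field \<Rightarrow> 'b::{comm_ring_1,real_normed_algebra_1,banach}) \<Rightarrow> (nat \<Rightarrow> nat \<Rightarrow> nat) \<Rightarrow> ('m::monoid_mult \<Rightarrow> nat) \<Rightarrow> ('m \<Rightarrow> 'k) \<Rightarrow> ('m \<Rightarrow> 'b) set" where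
  "ctr_inf_chars \<iota> \<omega> deg eps = {\<phi> \<in> linf \<omega> deg. is_inf_character \<iota> eps \<phi>}"

end

theory Submission
  imports Defs
begin

definition homk :: "('k::comm_ring_1 \<Rightarrow> 'c::comm_ring_1) \<Rightarrow> bool" where
  "homk \<iota> \<longleftrightarrow> \<iota> 1 = 1 \<and> (\<forall>a b. \<iota> (a + b) = \<iota> a + \<iota> b) \<and> (\<forall>a b. \<iota> (a * b) = \<iota> a * \<iota> b)"

lemma homk_1: "homk \<iota> \<Longrightarrow> \<iota> 1 = 1" by (simp add: homk_def)
lemma homk_add: "homk \<iota> \<Longrightarrow> \<iota> (a + b) = \<iota> a + \<iota> b" by (simp add: homk_def)
lemma homk_mult: "homk \<iota> \<Longrightarrow> \<iota> (a * b) = \<iota> a * \<iota> b" by (simp add: homk_def)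
lemma homk_0: "homk \<iota> \<Longrightarrow> \<iota> 0 = 0"
  using homk_add[of \<iota> 0 0] by simp
lemma homk_uminus: "homk \<iota> \<Longrightarrow> \<iota> (- a) = - \<iota> a"
  using homk_add[of \<iota> a "-a"] homk_0[of \<iota>] by (simp add: eq_neg_iff_add_eq_0 add.commute)
lemma homk_sum: "homk \<iota> \<Longrightarrow> \<iota> (sum f A) = (\<Sum>x\<in>A. \<iota> (f x))"
proof (induction A rule: infinite_finite_induct)
  case (infinite A) then show ?case by (simp add: homk_0)
next
  case empty then show ?case by (simp add: homk_0)
next
  case (insert x F) then show ?case by (simp add: homk_add)
qed

lemma fsupp_hbasis: "fsupp (hbasis a :: _ \<Rightarrow> 'k::zero_neq_one) = {a}"
  by (auto simp: fsupp_def hbasis_def)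

lemma finsupp_hbasis: "finsupp (hbasis a :: _ \<Rightarrow> 'k::zero_neq_one)"
  by (simp add: finsupp_def fsupp_hbasis)

lemma lin_map_superset:
  assumes "homk \<iota>" "finite A" "fsupp x \<subseteq> A"
  shows "lin_map \<iota> \<phi> x = (\<Sum>\<mu>\<in>A. \<iota> (x \<mu>) * \<phi> \<mu>)"
  unfolding lin_map_def
  by (rule sum.mono_neutral_left) (use assms in \<open>auto simp: fsupp_def homk_0\<close>)

lemma lin_map_hbasis:
  fixes \<iota> :: "'k::field \<Rightarrow> 'c::comm_ring_1"
  assumes "homk \<iota>"
  shows "lin_map \<iota> \<phi> (hbasis \<mu> :: _ \<Rightarrow> 'k) = \<phi> \<mu>"
  using assms by (simp add: lin_map_def hbasis_def homk_1 fsupp_hbasis[unfolded hbasis_def])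

lemma fsupp_malg_sub:
  "fsupp (malg_mult mul x y) \<subseteq> (\<lambda>(a,b). mul a b) ` (fsupp x \<times> fsupp y)"
proof
  fix r assume r: "r \<in> fsupp (malg_mult mul x y)"
  show "r \<in> (\<lambda>(a,b). mul a b) ` (fsupp x \<times> fsupp y)"
  proof (rule ccontr)
    assume n: "r \<notin> (\<lambda>(a,b). mul a b) ` (fsupp x \<times> fsupp y)"
    have e: "{(a,b). a \<in> fsupp x \<and> b \<in> fsupp y \<and> mul a b = r} = {}" using n by force
    have "malg_mult mul x y r = 0" unfolding malg_mult_def e by simp
    then show False using r by (simp add: fsupp_def)
  qed
qed

lemma finsupp_malg: "finsupp x \<Longrightarrow> finsupp y \<Longrightarrow> finsupp (malg_mult mul x y)"
  unfolding finsupp_def by (rule finite_subset[OF fsupp_malg_sub]) simp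

lemma malg_sum:
  fixes x y :: "'a \<Rightarrow> 'k::comm_ring_1" and \<iota> :: "'k \<Rightarrow> 'c::comm_ring_1"
  assumes hom: "homk \<iota>" and fx: "finsupp x" and fy: "finsupp y"
  shows "(\<Sum>r\<in>fsupp (malg_mult mul x y). \<iota> (malg_mult mul x y r) * h r)
       = (\<Sum>a\<in>fsupp x. \<Sum>b\<in>fsupp y. \<iota> (x a) * \<iota> (y b) * h (mul a b))"
proof -
  let ?X = "fsupp x" and ?Y = "fsupp y"
  let ?g = "\<lambda>(a,b). mul a b"
  let ?R = "?g ` (?X \<times> ?Y)"
  have fX: "finite ?X" and fY: "finite ?Y" using fx fy by (auto simp: finsupp_def)
  have fR: "finite ?R" using fX fY by simp
  have "(\<Sum>r\<in>fsupp (malg_mult mul x y). \<iota> (malg_mult mul x y r) * h r)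
      = (\<Sum>r\<in>?R. \<iota> (malg_mult mul x y r) * h r)"
    by (rule sum.mono_neutral_left[OF fR fsupp_malg_sub]) (auto simp: fsupp_def homk_0[OF hom])
  also have "\<dots> = (\<Sum>r\<in>?R. \<Sum>z\<in>{z \<in> ?X \<times> ?Y. ?g z = r}. \<iota> (x (fst z)) * \<iota> (y (snd z)) * h (?g z))"
  proof (rule sum.cong[OF refl])
    fix r assume "r \<in> ?R"
    have eq: "{(a,b). a \<in> ?X \<and> b \<in> ?Y \<and> mul a b = r} = {z \<in> ?X \<times> ?Y. ?g z = r}" by auto
    have "\<iota> (malg_mult mul x y r) * h r = (\<Sum>z\<in>{z \<in> ?X \<times> ?Y. ?g z = r}. \<iota> (x (fst z) * y (snd z))) * h r"
      unfolding malg_mult_def eq by (simp add: homk_sum[OF hom] case_prod_beta)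
    also have "\<dots> = (\<Sum>z\<in>{z \<in> ?X \<times> ?Y. ?g z = r}. \<iota> (x (fst z)) * \<iota> (y (snd z)) * h (?g z))"
      by (simp add: sum_distrib_right homk_mult[OF hom])
    finally show "\<iota> (malg_mult mul x y r) * h r = \<dots>" .
  qed
  also have "\<dots> = (\<Sum>z\<in>?X \<times> ?Y. \<iota> (x (fst z)) * \<iota> (y (snd z)) * h (?g z))"
    by (rule sum.group) (use fX fY in auto)
  also have "\<dots> = (\<Sum>a\<in>?X. \<Sum>b\<in>?Y. \<iota> (x a) * \<iota> (y b) * h (mul a b))"
    apply (simp add: sum.cartesian_product) by (rule sum.cong) auto
  finally show ?thesis .
qed

lemma lin_map_malg:
  fixes x y :: "'a::monoid_mult \<Rightarrow> 'k::comm_ring_1" and \<iota> :: "'k \<Rightarrow> 'c::comm_ring_1"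
  assumes hom: "homk \<iota>" and "finsupp x" "finsupp y"
  shows "lin_map \<iota> \<phi> (malg_mult mul x y) = (\<Sum>a\<in>fsupp x. \<Sum>b\<in>fsupp y. \<iota> (x a) * \<iota> (y b) * \<phi> (mul a b))"
  unfolding lin_map_def by (rule malg_sum[OF assms])

lemma malg_hbasis:
  "malg_mult mul (hbasis a) (hbasis b) = (hbasis (mul a b) :: _ \<Rightarrow> 'k::{comm_ring_1,zero_neq_one})"
proof
  fix p
  have "{(a', b'). a' \<in> fsupp (hbasis a :: _ \<Rightarrow> 'k) \<and> b' \<in> fsupp (hbasis b :: _ \<Rightarrow> 'k) \<and> mul a' b' = p}
       = (if mul a b = p then {(a,b)} else {})" by (auto simp: fsupp_hbasis)
  then show "malg_mult mul (hbasis a) (hbasis b) p = (hbasis (mul a b) p :: 'k)"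
    by (auto simp: malg_mult_def hbasis_def)
qed

lemma char_iff:
  fixes \<iota> :: "'k::field \<Rightarrow> 'b::comm_ring_1" and \<phi> :: "'m::monoid_mult \<Rightarrow> 'b"
  assumes hom: "homk \<iota>"
  shows "is_character \<iota> \<phi> \<longleftrightarrow> \<phi> 1 = 1 \<and> (\<forall>\<mu> \<nu>. \<phi> (\<mu> * \<nu>) = \<phi> \<mu> * \<phi> \<nu>)"
proof
  assume c: "is_character \<iota> \<phi>"
  show "\<phi> 1 = 1 \<and> (\<forall>\<mu> \<nu>. \<phi> (\<mu> * \<nu>) = \<phi> \<mu> * \<phi> \<nu>)"
  proof (intro conjI allI)
    have "lin_map \<iota> \<phi> (hbasis 1 :: _ \<Rightarrow> 'k) = 1" using c unfolding is_character_def by blast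
    then show "\<phi> 1 = 1" by (simp only: lin_map_hbasis[OF hom])
    fix \<mu> \<nu>
    have cc: "\<forall>x y. finsupp x \<longrightarrow> finsupp y \<longrightarrow> lin_map \<iota> \<phi> (malg_mult (*) x y) = lin_map \<iota> \<phi> x * lin_map \<iota> \<phi> (y :: _ \<Rightarrow> 'k)"
      using c unfolding is_character_def by blast
    have "lin_map \<iota> \<phi> (malg_mult (*) (hbasis \<mu> :: _ \<Rightarrow> 'k) (hbasis \<nu>)) = lin_map \<iota> \<phi> (hbasis \<mu> :: _ \<Rightarrow> 'k) * lin_map \<iota> \<phi> (hbasis \<nu> :: _ \<Rightarrow> 'k)"
      using cc[rule_format, OF finsupp_hbasis finsupp_hbasis] .
    then show "\<phi> (\<mu> * \<nu>) = \<phi> \<mu> * \<phi> \<nu>"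
      by (simp only: malg_hbasis lin_map_hbasis[OF hom])
  qed
next
  assume c: "\<phi> 1 = 1 \<and> (\<forall>\<mu> \<nu>. \<phi> (\<mu> * \<nu>) = \<phi> \<mu> * \<phi> \<nu>)"
  show "is_character \<iota> \<phi>"
    unfolding is_character_def
  proof (intro conjI allI impI)
    show "lin_map \<iota> \<phi> (hbasis 1 :: _ \<Rightarrow> 'k) = 1" using c by (simp only: lin_map_hbasis[OF hom])
    fix x y :: "'m \<Rightarrow> 'k" assume fx: "finsupp x" and fy: "finsupp y"
    have "lin_map \<iota> \<phi> (malg_mult (*) x y) = (\<Sum>a\<in>fsupp x. \<Sum>b\<in>fsupp y. (\<iota> (x a) * \<phi> a) * (\<iota> (y b) * \<phi> b))"
      unfolding lin_map_malg[OF hom fx fy]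
      by (intro sum.cong refl) (simp add: c mult.assoc mult.left_commute)
    also have "\<dots> = lin_map \<iota> \<phi> x * lin_map \<iota> \<phi> y"
      by (simp add: lin_map_def sum_product)
    finally show "lin_map \<iota> \<phi> (malg_mult (*) x y) = lin_map \<iota> \<phi> x * lin_map \<iota> \<phi> y" .
  qed
qed

lemma eps_lin_hbasis: "eps_lin eps (hbasis \<nu> :: _ \<Rightarrow> 'k::field) = eps \<nu>"
  unfolding eps_lin_def fsupp_hbasis by (simp add: hbasis_def)

lemma inf_char_iff:
  fixes \<iota> :: "'k::field \<Rightarrow> 'b::comm_ring_1" and \<phi> :: "'m::monoid_mult \<Rightarrow> 'b"
  assumes hom: "homk \<iota>"
  shows "is_inf_character \<iota> eps \<phi> \<longleftrightarrow> (\<forall>\<mu> \<nu>. \<phi> (\<mu> * \<nu>) = \<phi> \<mu> * \<iota> (eps \<nu>) + \<iota> (eps \<mu>) * \<phi> \<nu>)"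
proof
  assume c: "is_inf_character \<iota> eps \<phi>"
  show "\<forall>\<mu> \<nu>. \<phi> (\<mu> * \<nu>) = \<phi> \<mu> * \<iota> (eps \<nu>) + \<iota> (eps \<mu>) * \<phi> \<nu>"
  proof (intro allI)
    fix \<mu> \<nu>
    have "lin_map \<iota> \<phi> (malg_mult (*) (hbasis \<mu> :: _ \<Rightarrow> 'k) (hbasis \<nu>)) = lin_map \<iota> \<phi> (hbasis \<mu> :: _ \<Rightarrow> 'k) * \<iota> (eps_lin eps (hbasis \<nu>))
       + \<iota> (eps_lin eps (hbasis \<mu>)) * lin_map \<iota> \<phi> (hbasis \<nu> :: _ \<Rightarrow> 'k)"
      using c unfolding is_inf_character_def by (meson finsupp_hbasis)
    then show "\<phi> (\<mu> * \<nu>) = \<phi> \<mu> * \<iota> (eps \<nu>) + \<iota> (eps \<mu>) * \<phi> \<nu>"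
      by (simp only: malg_hbasis lin_map_hbasis[OF hom] eps_lin_hbasis)
  qed
next
  assume c: "\<forall>\<mu> \<nu>. \<phi> (\<mu> * \<nu>) = \<phi> \<mu> * \<iota> (eps \<nu>) + \<iota> (eps \<mu>) * \<phi> \<nu>"
  show "is_inf_character \<iota> eps \<phi>"
    unfolding is_inf_character_def
  proof (intro conjI allI impI)
    fix x y :: "'m \<Rightarrow> 'k" assume fx: "finsupp x" and fy: "finsupp y"
    have "lin_map \<iota> \<phi> (malg_mult (*) x y) = (\<Sum>a\<in>fsupp x. \<Sum>b\<in>fsupp y. (\<iota> (x a) * \<phi> a) * (\<iota> (y b) * \<iota> (eps b)) + (\<iota> (x a) * \<iota> (eps a)) * (\<iota> (y b) * \<phi> b))"
      unfolding lin_map_malg[OF hom fx fy]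
      by (intro sum.cong refl) (simp add: c distrib_left mult.assoc mult.left_commute)
    also have "\<dots> = (\<Sum>a\<in>fsupp x. \<Sum>b\<in>fsupp y. (\<iota> (x a) * \<phi> a) * (\<iota> (y b) * \<iota> (eps b)))
        + (\<Sum>a\<in>fsupp x. \<Sum>b\<in>fsupp y. (\<iota> (x a) * \<iota> (eps a)) * (\<iota> (y b) * \<phi> b))"
      by (simp only: sum.distrib)
    also have "\<dots> = lin_map \<iota> \<phi> x * \<iota> (eps_lin eps y) + \<iota> (eps_lin eps x) * lin_map \<iota> \<phi> y"
      by (simp only: lin_map_def eps_lin_def sum_product homk_sum[OF hom] homk_mult[OF hom])
    finally show "lin_map \<iota> \<phi> (malg_mult (*) x y) = lin_map \<iota> \<phi> x * \<iota> (eps_lin eps y) + \<iota> (eps_lin eps x) * lin_map \<iota> \<phi> y" .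
  qed
qed

lemma lin_map_sum:
  fixes z :: "'p \<Rightarrow> 'a \<Rightarrow> 'k::comm_ring_1" and \<iota> :: "'k \<Rightarrow> 'c::comm_ring_1"
  assumes hom: "homk \<iota>" and fP: "finite P" and fz: "\<forall>p\<in>P. finsupp (z p)"
  shows "lin_map \<iota> \<phi> (\<lambda>\<rho>. \<Sum>p\<in>P. c p * z p \<rho>) = (\<Sum>p\<in>P. \<iota> (c p) * lin_map \<iota> \<phi> (z p))"
proof -
  let ?R = "\<Union>p\<in>P. fsupp (z p)"
  have fR: "finite ?R" using fP fz by (auto simp: finsupp_def)
  have sub: "fsupp (\<lambda>\<rho>. \<Sum>p\<in>P. c p * z p \<rho>) \<subseteq> ?R"
  proof
    fix \<rho> assume "\<rho> \<in> fsupp (\<lambda>\<rho>. \<Sum>p\<in>P. c p * z p \<rho>)"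
    then have "(\<Sum>p\<in>P. c p * z p \<rho>) \<noteq> 0" by (simp add: fsupp_def)
    then obtain p where "p \<in> P" "c p * z p \<rho> \<noteq> 0" by (meson sum.neutral)
    then show "\<rho> \<in> ?R" by (auto simp: fsupp_def intro!: bexI[of _ p])
  qed
  have "lin_map \<iota> \<phi> (\<lambda>\<rho>. \<Sum>p\<in>P. c p * z p \<rho>) = (\<Sum>\<rho>\<in>?R. \<iota> (\<Sum>p\<in>P. c p * z p \<rho>) * \<phi> \<rho>)"
    by (rule lin_map_superset[OF hom fR sub])
  also have "\<dots> = (\<Sum>\<rho>\<in>?R. \<Sum>p\<in>P. \<iota> (c p) * (\<iota> (z p \<rho>) * \<phi> \<rho>))"
    by (simp add: homk_sum[OF hom] homk_mult[OF hom] sum_distrib_right ac_simps) (simp add: sum_distrib_left)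
  also have "\<dots> = (\<Sum>p\<in>P. \<iota> (c p) * (\<Sum>\<rho>\<in>?R. \<iota> (z p \<rho>) * \<phi> \<rho>))"
    by (subst sum.swap) (simp add: sum_distrib_left)
  also have "\<dots> = (\<Sum>p\<in>P. \<iota> (c p) * lin_map \<iota> \<phi> (z p))"
  proof (rule sum.cong[OF refl])
    fix p assume "p \<in> P"
    then have "fsupp (z p) \<subseteq> ?R" by auto
    then show "\<iota> (c p) * (\<Sum>\<rho>\<in>?R. \<iota> (z p \<rho>) * \<phi> \<rho>) = \<iota> (c p) * lin_map \<iota> \<phi> (z p)"
      by (simp add: lin_map_superset[OF hom fR])
  qed
  finally show ?thesis .
qed


context
  fixes \<iota> :: "'k::field \<Rightarrow> 'b::comm_ring_1" and deg :: "'m::monoid_mult \<Rightarrow> nat"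
    and Delta :: "'m \<Rightarrow> 'm \<times> 'm \<Rightarrow> 'k" and eps :: "'m \<Rightarrow> 'k" and S :: "'m \<Rightarrow> 'm \<Rightarrow> 'k"
  assumes hom: "homk \<iota>" and H: "graded_connected_hopf deg Delta eps S"
begin

lemma H_finD: "finite (fsupp (Delta \<mu>))" using H by (simp add: graded_connected_hopf_def finsupp_def)
lemma H_finS: "finite (fsupp (S \<mu>))" using H by (simp add: graded_connected_hopf_def finsupp_def)
lemma H_deg: "Delta \<mu> (a,b) \<noteq> 0 \<Longrightarrow> deg a + deg b = deg \<mu>" using H by (simp add: graded_connected_hopf_def)
lemma H_epspos: "0 < deg \<mu> \<Longrightarrow> eps \<mu> = 0" using H by (simp add: graded_connected_hopf_def)
lemma H_eps1: "eps 1 = 1" using H by (simp add: graded_connected_hopf_def)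
lemma H_epsmult: "eps (\<mu> * \<nu>) = eps \<mu> * eps \<nu>" using H by (simp add: graded_connected_hopf_def)
lemma H_conn: "deg \<mu> = 0 \<Longrightarrow> \<mu> = 1" using H by (simp add: graded_connected_hopf_def)
lemma H_D1: "Delta 1 = hbasis (1,1)" using H by (simp add: graded_connected_hopf_def)
lemma H_Dmult: "Delta (\<mu> * \<nu>) = malg_mult pair_mult (Delta \<mu>) (Delta \<nu>)" using H by (simp add: graded_connected_hopf_def)
lemma H_cL: "(\<Sum>a\<in>{a. Delta \<mu> (a, \<nu>) \<noteq> 0}. eps a * Delta \<mu> (a, \<nu>)) = hbasis \<mu> \<nu>"
  using H unfolding graded_connected_hopf_def by blast
lemma H_cR: "(\<Sum>b\<in>{b. Delta \<mu> (\<nu>, b) \<noteq> 0}. Delta \<mu> (\<nu>, b) * eps b) = hbasis \<mu> \<nu>"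
  using H unfolding graded_connected_hopf_def by blast
lemma H_aL: "lin_ext (\<lambda>(a, b). malg_mult (*) (S a) (hbasis b)) (Delta \<mu>) = (\<lambda>\<nu>. eps \<mu> * hbasis 1 \<nu>)"
  using H unfolding graded_connected_hopf_def by blast
lemma H_aR: "lin_ext (\<lambda>(a, b). malg_mult (*) (hbasis a) (S b)) (Delta \<mu>) = (\<lambda>\<nu>. eps \<mu> * hbasis 1 \<nu>)"
  using H unfolding graded_connected_hopf_def by blast

lemma D_1b: "Delta \<mu> (1, b) = hbasis \<mu> b"
proof -
  let ?A = "{a. Delta \<mu> (a, b) \<noteq> 0}"
  have fin: "finite ?A"
    by (rule finite_subset[OF _ finite_imageI[OF H_finD]]) (force simp: fsupp_def)
  have "(\<Sum>a\<in>?A. eps a * Delta \<mu> (a, b)) = (\<Sum>a\<in>?A. if a = 1 then Delta \<mu> (1, b) else 0)"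
  proof (rule sum.cong[OF refl])
    fix a assume "a \<in> ?A"
    show "eps a * Delta \<mu> (a, b) = (if a = 1 then Delta \<mu> (1, b) else 0)"
    proof (cases "a = 1")
      case True then show ?thesis by (simp add: H_eps1)
    next
      case False
      then have "deg a \<noteq> 0" using H_conn by blast
      then show ?thesis using False by (simp add: H_epspos)
    qed
  qed
  also have "\<dots> = Delta \<mu> (1, b)" using fin by (simp add: sum.delta)
  finally show ?thesis using H_cL[of \<mu> b] by simp
qed

lemma D_a1: "Delta \<mu> (a, 1) = hbasis \<mu> a"
proof -
  let ?A = "{b. Delta \<mu> (a, b) \<noteq> 0}"
  have fin: "finite ?A"
    by (rule finite_subset[OF _ finite_imageI[OF H_finD]]) (force simp: fsupp_def)
  have "(\<Sum>b\<in>?A. Delta \<mu> (a, b) * eps b) = (\<Sum>b\<in>?A. if b = 1 then Delta \<mu> (a, 1) else 0)"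
  proof (rule sum.cong[OF refl])
    fix b assume "b \<in> ?A"
    show "Delta \<mu> (a, b) * eps b = (if b = 1 then Delta \<mu> (a, 1) else 0)"
    proof (cases "b = 1")
      case True then show ?thesis by (simp add: H_eps1)
    next
      case False
      then have "deg b \<noteq> 0" using H_conn by blast
      then show ?thesis using False by (simp add: H_epspos)
    qed
  qed
  also have "\<dots> = Delta \<mu> (a, 1)" using fin by (simp add: sum.delta)
  finally show ?thesis using H_cR[of \<mu> a] by simp
qed

lemma D_1b_supp: "Delta \<mu> (1, b) \<noteq> 0 \<Longrightarrow> b = \<mu>"
  using D_1b by (auto simp: hbasis_def split: if_splits)
lemma D_a1_supp: "Delta \<mu> (a, 1) \<noteq> 0 \<Longrightarrow> a = \<mu>"
  using D_a1 by (auto simp: hbasis_def split: if_splits)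

lemma unitL: "hconv \<iota> Delta (\<lambda>\<mu>. \<iota> (eps \<mu>)) \<phi> = \<phi>"
proof
  fix \<mu>
  have mem: "(1, \<mu>) \<in> fsupp (Delta \<mu>)" by (simp add: fsupp_def D_1b hbasis_def)
  have "hconv \<iota> Delta (\<lambda>\<mu>. \<iota> (eps \<mu>)) \<phi> \<mu> = (\<Sum>p\<in>fsupp (Delta \<mu>). if p = (1, \<mu>) then \<phi> \<mu> else 0)"
    unfolding hconv_def
  proof (rule sum.cong[OF refl])
    fix p assume p: "p \<in> fsupp (Delta \<mu>)"
    obtain a b where ab: "p = (a, b)" by force
    show "\<iota> (Delta \<mu> p) * \<iota> (eps (fst p)) * \<phi> (snd p) = (if p = (1, \<mu>) then \<phi> \<mu> else 0)"
    proof (cases "a = 1")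
      case True
      then have "b = \<mu>" using p ab D_1b_supp by (simp add: fsupp_def)
      then show ?thesis using True ab by (simp add: D_1b hbasis_def H_eps1 homk_1[OF hom])
    next
      case False
      then have "deg a \<noteq> 0" using H_conn by blast
      then show ?thesis using False ab by (simp add: H_epspos homk_0[OF hom])
    qed
  qed
  also have "\<dots> = \<phi> \<mu>" using mem H_finD by (simp add: sum.delta)
  finally show "hconv \<iota> Delta (\<lambda>\<mu>. \<iota> (eps \<mu>)) \<phi> \<mu> = \<phi> \<mu>" .
qed

lemma unitR: "hconv \<iota> Delta \<phi> (\<lambda>\<mu>. \<iota> (eps \<mu>)) = \<phi>"
proof
  fix \<mu>
  have mem: "(\<mu>, 1) \<in> fsupp (Delta \<mu>)" by (simp add: fsupp_def D_a1 hbasis_def)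
  have "hconv \<iota> Delta \<phi> (\<lambda>\<mu>. \<iota> (eps \<mu>)) \<mu> = (\<Sum>p\<in>fsupp (Delta \<mu>). if p = (\<mu>, 1) then \<phi> \<mu> else 0)"
    unfolding hconv_def
  proof (rule sum.cong[OF refl])
    fix p assume p: "p \<in> fsupp (Delta \<mu>)"
    obtain a b where ab: "p = (a, b)" by force
    show "\<iota> (Delta \<mu> p) * \<phi> (fst p) * \<iota> (eps (snd p)) = (if p = (\<mu>, 1) then \<phi> \<mu> else 0)"
    proof (cases "b = 1")
      case True
      then have "a = \<mu>" using p ab D_a1_supp by (simp add: fsupp_def)
      then show ?thesis using True ab by (simp add: D_a1 hbasis_def H_eps1 homk_1[OF hom])
    next
      case False
      then have "deg b \<noteq> 0" using H_conn by blast
      then show ?thesis using False ab by (simp add: H_epspos homk_0[OF hom])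
    qed
  qed
  also have "\<dots> = \<phi> \<mu>" using mem H_finD by (simp add: sum.delta)
  finally show "hconv \<iota> Delta \<phi> (\<lambda>\<mu>. \<iota> (eps \<mu>)) \<mu> = \<phi> \<mu>" .
qed

lemma conv_mult:
  "hconv \<iota> Delta f g (\<mu> * \<nu>) = (\<Sum>p\<in>fsupp (Delta \<mu>). \<Sum>q\<in>fsupp (Delta \<nu>).
      \<iota> (Delta \<mu> p) * \<iota> (Delta \<nu> q) * (f (fst p * fst q) * g (snd p * snd q)))"
proof -
  have "hconv \<iota> Delta f g (\<mu> * \<nu>) = (\<Sum>r\<in>fsupp (malg_mult pair_mult (Delta \<mu>) (Delta \<nu>)).
      \<iota> (malg_mult pair_mult (Delta \<mu>) (Delta \<nu>) r) * (f (fst r) * g (snd r)))"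
    unfolding hconv_def H_Dmult by (simp add: mult.assoc)
  also have "\<dots> = (\<Sum>p\<in>fsupp (Delta \<mu>). \<Sum>q\<in>fsupp (Delta \<nu>).
      \<iota> (Delta \<mu> p) * \<iota> (Delta \<nu> q) * (f (fst (pair_mult p q)) * g (snd (pair_mult p q))))"
    by (rule malg_sum[OF hom]) (simp_all add: finsupp_def H_finD)
  finally show ?thesis by (simp add: pair_mult_def)
qed

lemma conv_prod:
  "(\<Sum>p\<in>fsupp (Delta \<mu>). \<Sum>q\<in>fsupp (Delta \<nu>).
      \<iota> (Delta \<mu> p) * \<iota> (Delta \<nu> q) * ((a (fst p) * c (snd p)) * (b (fst q) * d (snd q))))
   = hconv \<iota> Delta a c \<mu> * hconv \<iota> Delta b d \<nu>"
  unfolding hconv_def sum_product by (intro sum.cong refl) (simp add: ac_simps)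

end


context
  fixes \<iota> :: "'k::field \<Rightarrow> 'b::comm_ring_1" and deg :: "'m::monoid_mult \<Rightarrow> nat"
    and Delta :: "'m \<Rightarrow> 'm \<times> 'm \<Rightarrow> 'k" and eps :: "'m \<Rightarrow> 'k" and S :: "'m \<Rightarrow> 'm \<Rightarrow> 'k"
  assumes hom: "homk \<iota>" and H: "graded_connected_hopf deg Delta eps S"
begin

lemma hb_app: "hbasis a b = (if b = a then 1 else 0)" by (simp add: hbasis_def)
lemma H_fsS: "finsupp (S \<mu>)" using H_finS[OF hom H] by (simp add: finsupp_def)
lemma H_fsD: "finsupp (Delta \<mu>)" using H_finD[OF hom H] by (simp add: finsupp_def)

lemma lin_map_unit: "lin_map \<iota> \<phi> (\<lambda>\<nu>. c * hbasis 1 \<nu>) = \<iota> c * \<phi> 1"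
proof -
  have "lin_map \<iota> \<phi> (\<lambda>\<nu>. c * hbasis 1 \<nu>) = (\<Sum>\<rho>\<in>{1}. \<iota> (c * hbasis 1 \<rho>) * \<phi> \<rho>)"
    by (rule lin_map_superset[OF hom]) (auto simp: fsupp_def hbasis_def split: if_splits)
  then show ?thesis by (simp add: hbasis_def)
qed

context
  fixes \<phi> :: "'m \<Rightarrow> 'b"
  assumes \<phi>1: "\<phi> 1 = 1" and \<phi>m: "\<And>\<mu> \<nu>. \<phi> (\<mu> * \<nu>) = \<phi> \<mu> * \<phi> \<nu>"
begin

lemma lm_R: "lin_map \<iota> \<phi> (malg_mult (*) (hbasis a :: _ \<Rightarrow> 'k) (S b)) = \<phi> a * comp_S \<iota> S \<phi> b"
proof -
  have "lin_map \<iota> \<phi> (malg_mult (*) (hbasis a :: _ \<Rightarrow> 'k) (S b))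
     = (\<Sum>b'\<in>fsupp (S b). \<iota> 1 * \<iota> (S b b') * \<phi> (a * b'))"
    by (subst lin_map_malg[OF hom]) (simp_all add: finsupp_hbasis H_fsS fsupp_hbasis hb_app)
  also have "\<dots> = \<phi> a * comp_S \<iota> S \<phi> b"
    by (simp add: comp_S_def sum_distrib_left \<phi>m homk_1[OF hom] ac_simps)
  finally show ?thesis .
qed

lemma lm_L: "lin_map \<iota> \<phi> (malg_mult (*) (S a) (hbasis b :: _ \<Rightarrow> 'k)) = comp_S \<iota> S \<phi> a * \<phi> b"
proof -
  have "lin_map \<iota> \<phi> (malg_mult (*) (S a) (hbasis b :: _ \<Rightarrow> 'k))
     = (\<Sum>a'\<in>fsupp (S a). \<iota> (S a a') * \<iota> 1 * \<phi> (a' * b))"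
    by (subst lin_map_malg[OF hom]) (simp_all add: finsupp_hbasis H_fsS fsupp_hbasis hb_app)
  also have "\<dots> = comp_S \<iota> S \<phi> a * \<phi> b"
    unfolding comp_S_def sum_distrib_right by (intro sum.cong refl) (simp add: \<phi>m homk_1[OF hom] ac_simps)
  finally show ?thesis .
qed

lemma invR: "hconv \<iota> Delta \<phi> (comp_S \<iota> S \<phi>) = (\<lambda>\<mu>. \<iota> (eps \<mu>))"
proof
  fix \<mu>
  let ?F = "\<lambda>p. (case p of (a, b) \<Rightarrow> malg_mult (*) (hbasis a :: _ \<Rightarrow> 'k) (S b))"
  have "lin_map \<iota> \<phi> (lin_ext (\<lambda>(a, b). malg_mult (*) (hbasis a) (S b)) (Delta \<mu>))
      = lin_map \<iota> \<phi> (\<lambda>v. \<Sum>p\<in>fsupp (Delta \<mu>). Delta \<mu> p * ?F p v)"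
    by (simp add: lin_ext_def)
  also have "\<dots> = (\<Sum>p\<in>fsupp (Delta \<mu>). \<iota> (Delta \<mu> p) * lin_map \<iota> \<phi> (?F p))"
    by (rule lin_map_sum[OF hom H_finD[OF hom H]])
       (auto intro!: finsupp_malg simp: finsupp_hbasis H_fsS)
  also have "\<dots> = hconv \<iota> Delta \<phi> (comp_S \<iota> S \<phi>) \<mu>"
    unfolding hconv_def by (intro sum.cong refl) (simp add: case_prod_beta lm_R mult.assoc)
  finally have "hconv \<iota> Delta \<phi> (comp_S \<iota> S \<phi>) \<mu> = lin_map \<iota> \<phi> (\<lambda>\<nu>. eps \<mu> * hbasis 1 \<nu>)"
    by (simp only: H_aR[OF hom H])
  then show "hconv \<iota> Delta \<phi> (comp_S \<iota> S \<phi>) \<mu> = \<iota> (eps \<mu>)"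
    by (simp add: lin_map_unit \<phi>1)
qed

lemma invL: "hconv \<iota> Delta (comp_S \<iota> S \<phi>) \<phi> = (\<lambda>\<mu>. \<iota> (eps \<mu>))"
proof
  fix \<mu>
  let ?F = "\<lambda>p. (case p of (a, b) \<Rightarrow> malg_mult (*) (S a) (hbasis b :: _ \<Rightarrow> 'k))"
  have "lin_map \<iota> \<phi> (lin_ext (\<lambda>(a, b). malg_mult (*) (S a) (hbasis b)) (Delta \<mu>))
      = lin_map \<iota> \<phi> (\<lambda>v. \<Sum>p\<in>fsupp (Delta \<mu>). Delta \<mu> p * ?F p v)"
    by (simp add: lin_ext_def)
  also have "\<dots> = (\<Sum>p\<in>fsupp (Delta \<mu>). \<iota> (Delta \<mu> p) * lin_map \<iota> \<phi> (?F p))"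
    by (rule lin_map_sum[OF hom H_finD[OF hom H]])
       (auto intro!: finsupp_malg simp: finsupp_hbasis H_fsS)
  also have "\<dots> = hconv \<iota> Delta (comp_S \<iota> S \<phi>) \<phi> \<mu>"
    unfolding hconv_def by (intro sum.cong refl) (simp add: case_prod_beta lm_L mult.assoc)
  finally have "hconv \<iota> Delta (comp_S \<iota> S \<phi>) \<phi> \<mu> = lin_map \<iota> \<phi> (\<lambda>\<nu>. eps \<mu> * hbasis 1 \<nu>)"
    by (simp only: H_aL[OF hom H])
  then show "hconv \<iota> Delta (comp_S \<iota> S \<phi>) \<phi> \<mu> = \<iota> (eps \<mu>)"
    by (simp add: lin_map_unit \<phi>1)
qed

lemma uniq:
  fixes X Y :: "'m \<Rightarrow> 'm \<Rightarrow> 'b"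
  assumes eq: "\<And>\<mu> \<nu>. (\<Sum>p\<in>fsupp (Delta \<mu>). \<Sum>q\<in>fsupp (Delta \<nu>).
      \<iota> (Delta \<mu> p) * \<iota> (Delta \<nu> q) * (\<phi> (fst p) * \<phi> (fst q) * X (snd p) (snd q)))
    = (\<Sum>p\<in>fsupp (Delta \<mu>). \<Sum>q\<in>fsupp (Delta \<nu>).
      \<iota> (Delta \<mu> p) * \<iota> (Delta \<nu> q) * (\<phi> (fst p) * \<phi> (fst q) * Y (snd p) (snd q)))"
  shows "X \<mu> \<nu> = Y \<mu> \<nu>"
proof -
  have "\<forall>\<mu> \<nu>. deg \<mu> + deg \<nu> = n \<longrightarrow> X \<mu> \<nu> = Y \<mu> \<nu>" for n
  proof (induction n rule: less_induct)
    case (less n)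
    show ?case
    proof (intro allI impI)
      fix \<mu> \<nu> assume n: "deg \<mu> + deg \<nu> = n"
      let ?P = "fsupp (Delta \<mu>)" and ?Q = "fsupp (Delta \<nu>)"
      let ?t = "\<lambda>z. \<iota> (Delta \<mu> (fst z)) * \<iota> (Delta \<nu> (snd z)) * (\<phi> (fst (fst z)) * \<phi> (fst (snd z))
                  * (X (snd (fst z)) (snd (snd z)) - Y (snd (fst z)) (snd (snd z))))"
      let ?z0 = "((1::'m, \<mu>), (1::'m, \<nu>))"
      have fPQ: "finite (?P \<times> ?Q)" using H_finD[OF hom H] by simp
      have z0: "?z0 \<in> ?P \<times> ?Q" by (simp add: fsupp_def D_1b[OF hom H] hbasis_def)
      have "(\<Sum>z\<in>?P \<times> ?Q. ?t z) = 0"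
        unfolding sum.cartesian_product' using eq[of \<mu> \<nu>]
        by (simp add: right_diff_distrib sum_subtractf)
      moreover have "(\<Sum>z\<in>?P \<times> ?Q. ?t z) = (\<Sum>z\<in>?P \<times> ?Q. if z = ?z0 then ?t z else 0)"
      proof (rule sum.cong[OF refl])
        fix z assume z: "z \<in> ?P \<times> ?Q"
        show "?t z = (if z = ?z0 then ?t z else 0)"
        proof (cases "z = ?z0")
          case True then show ?thesis by simp
        next
          case False
          obtain a b c d where zz: "z = ((a, b), (c, d))" by (metis prod.collapse)
          have Dab: "Delta \<mu> (a, b) \<noteq> 0" and Dcd: "Delta \<nu> (c, d) \<noteq> 0" using z zz by (auto simp: fsupp_def)
          have dab: "deg a + deg b = deg \<mu>" and dcd: "deg c + deg d = deg \<nu>"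
            using H_deg[OF hom H] Dab Dcd by auto
          have "a \<noteq> 1 \<or> c \<noteq> 1"
          proof (rule ccontr)
            assume "\<not> (a \<noteq> 1 \<or> c \<noteq> 1)"
            then have "a = 1" "c = 1" by auto
            then have "b = \<mu>" "d = \<nu>" using D_1b_supp[OF hom H] Dab Dcd by auto
            then show False using False zz \<open>a = 1\<close> \<open>c = 1\<close> by simp
          qed
          then have "deg a \<noteq> 0 \<or> deg c \<noteq> 0" using H_conn[OF hom H] by blast
          then have "deg b + deg d < n" using dab dcd n by linarith
          then have "X b d = Y b d" using less.IH by blast
          then show ?thesis using False zz by auto
        qed
      qed
      moreover have "(\<Sum>z\<in>?P \<times> ?Q. if z = ?z0 then ?t z else 0) = ?t ?z0"
        using fPQ z0 by (simp only: sum.delta) simp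
      ultimately have "?t ?z0 = 0" by simp
      then show "X \<mu> \<nu> = Y \<mu> \<nu>" by (simp add: homk_1[OF hom] \<phi>1 D_1b[OF hom H] hbasis_def)
    qed
  qed
  then show ?thesis by blast
qed

lemma compS_1: "comp_S \<iota> S \<phi> 1 = 1"
proof -
  have "hconv \<iota> Delta \<phi> (comp_S \<iota> S \<phi>) 1 = 1" using invR by (simp add: H_eps1[OF hom H] homk_1[OF hom])
  moreover have "hconv \<iota> Delta \<phi> (comp_S \<iota> S \<phi>) 1 = comp_S \<iota> S \<phi> 1"
    by (simp add: hconv_def H_D1[OF hom H] fsupp_hbasis hb_app homk_1[OF hom] \<phi>1)
  ultimately show ?thesis by simp
qed

lemma compS_mult: "comp_S \<iota> S \<phi> (\<mu> * \<nu>) = comp_S \<iota> S \<phi> \<mu> * comp_S \<iota> S \<phi> \<nu>"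
proof (rule uniq[of "\<lambda>a b. comp_S \<iota> S \<phi> (a * b)" "\<lambda>a b. comp_S \<iota> S \<phi> a * comp_S \<iota> S \<phi> b"])
  fix \<mu> \<nu>
  let ?\<psi> = "comp_S \<iota> S \<phi>"
  have "(\<Sum>p\<in>fsupp (Delta \<mu>). \<Sum>q\<in>fsupp (Delta \<nu>).
      \<iota> (Delta \<mu> p) * \<iota> (Delta \<nu> q) * (\<phi> (fst p) * \<phi> (fst q) * ?\<psi> (snd p * snd q)))
      = hconv \<iota> Delta \<phi> ?\<psi> (\<mu> * \<nu>)"
    by (simp add: conv_mult[OF hom H] \<phi>m)
  also have "\<dots> = \<iota> (eps \<mu>) * \<iota> (eps \<nu>)"
    using invR by (simp add: H_epsmult[OF hom H] homk_mult[OF hom])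
  also have "\<dots> = hconv \<iota> Delta \<phi> ?\<psi> \<mu> * hconv \<iota> Delta \<phi> ?\<psi> \<nu>"
    using invR by simp
  also have "\<dots> = (\<Sum>p\<in>fsupp (Delta \<mu>). \<Sum>q\<in>fsupp (Delta \<nu>).
      \<iota> (Delta \<mu> p) * \<iota> (Delta \<nu> q) * (\<phi> (fst p) * \<phi> (fst q) * (?\<psi> (snd p) * ?\<psi> (snd q))))"
    by (subst conv_prod[OF hom H, symmetric]) (intro sum.cong refl, simp add: ac_simps)
  finally show "(\<Sum>p\<in>fsupp (Delta \<mu>). \<Sum>q\<in>fsupp (Delta \<nu>).
      \<iota> (Delta \<mu> p) * \<iota> (Delta \<nu> q) * (\<phi> (fst p) * \<phi> (fst q) * ?\<psi> (snd p * snd q)))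
    = (\<Sum>p\<in>fsupp (Delta \<mu>). \<Sum>q\<in>fsupp (Delta \<nu>).
      \<iota> (Delta \<mu> p) * \<iota> (Delta \<nu> q) * (\<phi> (fst p) * \<phi> (fst q) * (?\<psi> (snd p) * ?\<psi> (snd q))))" .
qed

end

lemma conv_char:
  assumes "\<phi> 1 = 1" "\<And>\<mu> \<nu>. \<phi> (\<mu> * \<nu>) = \<phi> \<mu> * \<phi> \<nu>"
    and "\<psi> 1 = 1" "\<And>\<mu> \<nu>. \<psi> (\<mu> * \<nu>) = \<psi> \<mu> * \<psi> \<nu>"
  shows "hconv \<iota> Delta \<phi> \<psi> 1 = 1" "hconv \<iota> Delta \<phi> \<psi> (\<mu> * \<nu>) = hconv \<iota> Delta \<phi> \<psi> \<mu> * hconv \<iota> Delta \<phi> \<psi> \<nu>"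
proof -
  show "hconv \<iota> Delta \<phi> \<psi> 1 = 1"
    by (simp add: hconv_def H_D1[OF hom H] fsupp_hbasis hb_app homk_1[OF hom] assms)
  show "hconv \<iota> Delta \<phi> \<psi> (\<mu> * \<nu>) = hconv \<iota> Delta \<phi> \<psi> \<mu> * hconv \<iota> Delta \<phi> \<psi> \<nu>"
    by (subst conv_prod[OF hom H, symmetric]) (simp add: conv_mult[OF hom H] assms ac_simps)
qed

lemma conv_inf:
  assumes \<phi>: "\<And>\<mu> \<nu>. \<phi> (\<mu> * \<nu>) = \<phi> \<mu> * \<iota> (eps \<nu>) + \<iota> (eps \<mu>) * \<phi> \<nu>"
    and \<psi>: "\<And>\<mu> \<nu>. \<psi> (\<mu> * \<nu>) = \<psi> \<mu> * \<iota> (eps \<nu>) + \<iota> (eps \<mu>) * \<psi> \<nu>"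
  shows "hconv \<iota> Delta \<phi> \<psi> (\<mu> * \<nu>) = hconv \<iota> Delta \<phi> \<psi> \<mu> * \<iota> (eps \<nu>) + \<phi> \<mu> * \<psi> \<nu> + \<psi> \<mu> * \<phi> \<nu>
     + \<iota> (eps \<mu>) * hconv \<iota> Delta \<phi> \<psi> \<nu>"
proof -
  let ?e = "\<lambda>\<mu>. \<iota> (eps \<mu>)"
  let ?D = "\<lambda>p q. \<iota> (Delta \<mu> p) * \<iota> (Delta \<nu> q)"
  have "hconv \<iota> Delta \<phi> \<psi> (\<mu> * \<nu>) = (\<Sum>p\<in>fsupp (Delta \<mu>). \<Sum>q\<in>fsupp (Delta \<nu>).
        ?D p q * ((\<phi> (fst p) * \<psi> (snd p)) * (?e (fst q) * ?e (snd q)))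
      + ?D p q * ((\<phi> (fst p) * ?e (snd p)) * (?e (fst q) * \<psi> (snd q)))
      + ?D p q * ((?e (fst p) * \<psi> (snd p)) * (\<phi> (fst q) * ?e (snd q)))
      + ?D p q * ((?e (fst p) * ?e (snd p)) * (\<phi> (fst q) * \<psi> (snd q))))"
    unfolding conv_mult[OF hom H] by (intro sum.cong refl) (simp add: \<phi> \<psi> algebra_simps)
  also have "\<dots> = hconv \<iota> Delta \<phi> \<psi> \<mu> * hconv \<iota> Delta ?e ?e \<nu> + hconv \<iota> Delta \<phi> ?e \<mu> * hconv \<iota> Delta ?e \<psi> \<nu>
      + hconv \<iota> Delta ?e \<psi> \<mu> * hconv \<iota> Delta \<phi> ?e \<nu> + hconv \<iota> Delta ?e ?e \<mu> * hconv \<iota> Delta \<phi> \<psi> \<nu>"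
    by (simp only: sum.distrib conv_prod[OF hom H, of \<mu> \<nu> \<phi> \<psi> ?e ?e] conv_prod[OF hom H, of \<mu> \<nu> \<phi> ?e ?e \<psi>]
      conv_prod[OF hom H, of \<mu> \<nu> ?e \<psi> \<phi> ?e] conv_prod[OF hom H, of \<mu> \<nu> ?e ?e \<phi> \<psi>])
  also have "\<dots> = hconv \<iota> Delta \<phi> \<psi> \<mu> * \<iota> (eps \<nu>) + \<phi> \<mu> * \<psi> \<nu> + \<psi> \<mu> * \<phi> \<nu>
     + \<iota> (eps \<mu>) * hconv \<iota> Delta \<phi> \<psi> \<nu>"
    by (simp add: unitL[OF hom H] unitR[OF hom H])
  finally show ?thesis .
qed

end


lemma bao_homk: "banach_algebra_over \<iota> \<Longrightarrow> homk \<iota>"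
  by (simp add: banach_algebra_over_def homk_def)

lemma bao_norm: "banach_algebra_over \<iota> \<Longrightarrow> norm (\<iota> a * x) = norm a * norm x"
  by (simp add: banach_algebra_over_def)

lemma gf_pos: "growth_family \<omega> \<Longrightarrow> 1 \<le> \<omega> k n" by (simp add: growth_family_def)
lemma gf_posr: "growth_family \<omega> \<Longrightarrow> 1 \<le> real (\<omega> k n)" using gf_pos by (metis of_nat_1 of_nat_le_iff)
lemma gf_mono: assumes "growth_family \<omega>" "k \<le> k'" shows "\<omega> k n \<le> \<omega> k' n"
proof -
  have "\<And>k. \<omega> k n \<le> \<omega> (Suc k) n" using assms(1) by (simp add: growth_family_def)
  then show ?thesis using lift_Suc_mono_le[of "\<lambda>k. \<omega> k n"] assms(2) by blast
qed
lemma gf_monor: "growth_family \<omega> \<Longrightarrow> k \<le> k' \<Longrightarrow> real (\<omega> k n) \<le> real (\<omega> k' n)"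
  using gf_mono by simp
lemma gf_subr: "growth_family \<omega> \<Longrightarrow> real (\<omega> k a) * real (\<omega> k b) \<le> real (\<omega> k (a + b))"
  unfolding growth_family_def by (metis of_nat_le_iff of_nat_mult)

lemma linf_iff: "\<phi> \<in> linf \<omega> dg \<longleftrightarrow> (\<exists>k C. \<forall>t. norm (\<phi> t) \<le> C * real (\<omega> k (dg t)))"
  by (simp add: linf_def linf_step_def)

lemma linf_bound:
  assumes gf: "growth_family \<omega>" and "\<phi> \<in> linf \<omega> dg"
  shows "\<exists>k C. C \<ge> 0 \<and> (\<forall>k'\<ge>k. \<forall>t. norm (\<phi> t) \<le> C * real (\<omega> k' (dg t)))"
proof -
  obtain k C where C: "\<forall>t. norm (\<phi> t) \<le> C * real (\<omega> k (dg t))" using assms(2) linf_iff by blast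
  have "norm (\<phi> t) \<le> max C 0 * real (\<omega> k' (dg t))" if "k \<le> k'" for k' t
  proof -
    have "norm (\<phi> t) \<le> C * real (\<omega> k (dg t))" using C by blast
    also have "\<dots> \<le> max C 0 * real (\<omega> k (dg t))" using gf_posr[OF gf] by (intro mult_right_mono) auto
    also have "\<dots> \<le> max C 0 * real (\<omega> k' (dg t))" using gf_monor[OF gf that] by (intro mult_left_mono) auto
    finally show ?thesis .
  qed
  then show ?thesis by (intro exI[of _ k] exI[of _ "max C 0"]) auto
qed

lemma linf_comb:
  assumes bao: "banach_algebra_over \<iota>" and gf: "growth_family \<omega>"
    and u: "u \<in> linf \<omega> dg" and v: "v \<in> linf \<omega> dg"
  shows "(\<lambda>t. \<iota> a * u t + \<iota> b * v t) \<in> linf \<omega> dg"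
proof -
  obtain k1 C1 where C1: "C1 \<ge> 0" "\<forall>k'\<ge>k1. \<forall>t. norm (u t) \<le> C1 * real (\<omega> k' (dg t))"
    using linf_bound[OF gf u] by blast
  obtain k2 C2 where C2: "C2 \<ge> 0" "\<forall>k'\<ge>k2. \<forall>t. norm (v t) \<le> C2 * real (\<omega> k' (dg t))"
    using linf_bound[OF gf v] by blast
  let ?k = "max k1 k2"
  have "norm (\<iota> a * u t + \<iota> b * v t) \<le> (norm a * C1 + norm b * C2) * real (\<omega> ?k (dg t))" for t
  proof -
    have "norm (\<iota> a * u t + \<iota> b * v t) \<le> norm a * norm (u t) + norm b * norm (v t)"
      using norm_triangle_ineq[of "\<iota> a * u t" "\<iota> b * v t"] by (simp add: bao_norm[OF bao])
    also have "\<dots> \<le> norm a * (C1 * real (\<omega> ?k (dg t))) + norm b * (C2 * real (\<omega> ?k (dg t)))"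
      using C1 C2 by (intro add_mono mult_left_mono) auto
    finally show ?thesis by (simp add: algebra_simps)
  qed
  then show ?thesis unfolding linf_iff by blast
qed

lemma l1_seminorm_fin:
  assumes "finite A" "fsupp c \<subseteq> A"
  shows "l1_seminorm \<omega> dg k c = (\<Sum>t\<in>A. norm (c t) * real (\<omega> k (dg t)))"
proof -
  have "l1_seminorm \<omega> dg k c = infsum (\<lambda>t. norm (c t) * real (\<omega> k (dg t))) A"
    unfolding l1_seminorm_def by (rule infsum_cong_neutral) (use assms in \<open>auto simp: fsupp_def\<close>)
  then show ?thesis using assms by simp
qed

lemma l1_space_fin:
  assumes "finite (fsupp c)"
  shows "c \<in> l1_space \<omega> dg"
  unfolding l1_space_def
proof (intro CollectI allI)
  fix k
  have "(\<lambda>t. norm (c t) * real (\<omega> k (dg t))) summable_on UNIV \<longleftrightarrow> (\<lambda>t. norm (c t) * real (\<omega> k (dg t))) summable_on fsupp c"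
    by (rule summable_on_cong_neutral) (auto simp: fsupp_def)
  then show "(\<lambda>t. norm (c t) * real (\<omega> k (dg t))) summable_on UNIV" using assms by simp
qed

lemma l1_ball_open:
  shows "l1_open \<omega> dg {y \<in> l1_space \<omega> dg. l1_seminorm \<omega> dg k y < 1}"
  unfolding l1_open_def
proof (intro conjI ballI)
  show "{y \<in> l1_space \<omega> dg. l1_seminorm \<omega> dg k y < 1} \<subseteq> l1_space \<omega> dg" by blast
  fix x assume x: "x \<in> {y \<in> l1_space \<omega> dg. l1_seminorm \<omega> dg k y < 1}"
  let ?e = "1 - l1_seminorm \<omega> dg k x"
  show "\<exists>F e. finite F \<and> 0 < e \<and> {y \<in> l1_space \<omega> dg. \<forall>k\<in>F. l1_seminorm \<omega> dg k (y - x) < e}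
      \<subseteq> {y \<in> l1_space \<omega> dg. l1_seminorm \<omega> dg k y < 1}"
  proof (intro exI[of _ "{k}"] exI[of _ ?e] conjI subsetI)
    show "0 < ?e" using x by simp
    show "finite {k}" by simp
  next
    fix y assume y: "y \<in> {y \<in> l1_space \<omega> dg. \<forall>k\<in>{k}. l1_seminorm \<omega> dg k (y - x) < ?e}"
    let ?f = "\<lambda>c t. norm (c t) * real (\<omega> k (dg t))"
    have sy: "?f y summable_on UNIV" using y by (simp add: l1_space_def)
    have sx: "?f x summable_on UNIV" using x by (simp add: l1_space_def)
    have sd: "?f (y - x) summable_on UNIV"
    proof (rule summable_on_comparison_test[OF summable_on_add[OF sy sx]])
      fix t
      show "?f (y - x) t \<le> ?f y t + ?f x t"
        using mult_right_mono[OF norm_triangle_ineq4[of "y t" "x t"], of "real (\<omega> k (dg t))"] by (simp add: fun_diff_def algebra_simps)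
      show "0 \<le> ?f (y - x) t" by simp
    qed
    have "l1_seminorm \<omega> dg k y \<le> infsum (\<lambda>t. ?f x t + ?f (y - x) t) UNIV"
      unfolding l1_seminorm_def
    proof (rule infsum_mono[OF sy summable_on_add[OF sx sd]])
      fix t
      show "?f y t \<le> ?f x t + ?f (y - x) t"
        using mult_right_mono[OF norm_triangle_sub[of "y t" "x t"], of "real (\<omega> k (dg t))"] by (simp add: fun_diff_def algebra_simps)
    qed
    also have "\<dots> = l1_seminorm \<omega> dg k x + l1_seminorm \<omega> dg k (y - x)"
      unfolding l1_seminorm_def by (rule infsum_add[OF sx sd])
    finally have "l1_seminorm \<omega> dg k y < 1" using y by simp
    then show "y \<in> {y \<in> l1_space \<omega> dg. l1_seminorm \<omega> dg k y < 1}" using y by simp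
  qed
qed


lemma lin_ext_hbasis: "lin_ext G (hbasis \<mu> :: _ \<Rightarrow> 'k::field) = G \<mu>"
  unfolding lin_ext_def fsupp_hbasis by (simp add: hbasis_def)

lemma ctrl_bound:
  fixes T :: "('m \<Rightarrow> 'k::real_normed_field) \<Rightarrow> ('j \<Rightarrow> 'k)" and G :: "'m \<Rightarrow> 'j \<Rightarrow> 'k" and dg1 :: "'m \<Rightarrow> nat"
  assumes gf: "growth_family \<omega>" and T: "l1_cont_linear \<omega> dg1 dg2 T"
    and TG: "\<forall>x. finsupp x \<longrightarrow> T x = lin_ext G x" and fG: "\<And>\<mu>. finite (fsupp (G \<mu>))"
  shows "\<exists>K C. \<forall>\<mu>. (\<Sum>p\<in>fsupp (G \<mu>). norm (G \<mu> p) * real (\<omega> k (dg2 p))) \<le> C * real (\<omega> K (dg1 \<mu>))"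
proof -
  let ?W = "{y \<in> l1_space \<omega> dg2. l1_seminorm \<omega> dg2 k y < 1}"
  let ?O = "{c \<in> l1_space \<omega> dg1. T c \<in> ?W}"
  have O: "l1_open \<omega> dg1 ?O" using T l1_ball_open unfolding l1_cont_linear_def by blast
  have lin: "\<And>a b c d. c \<in> l1_space \<omega> dg1 \<Longrightarrow> d \<in> l1_space \<omega> dg1 \<Longrightarrow>
        T (\<lambda>t. a * c t + b * d t) = (\<lambda>s. a * T c s + b * T d s)"
    using T unfolding l1_cont_linear_def by blast
  have z: "(\<lambda>_. 0) \<in> l1_space \<omega> dg1" by (rule l1_space_fin) (simp add: fsupp_def)
  have T0: "T (\<lambda>_. 0) = (\<lambda>_. 0)" using lin[OF z z, of 0 0] by simp
  have z2: "(\<lambda>_. 0) \<in> l1_space \<omega> dg2" by (rule l1_space_fin) (simp add: fsupp_def)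
  have "l1_seminorm \<omega> dg2 k (\<lambda>_. 0::'k) = 0" by (subst l1_seminorm_fin[of "{}"]) (auto simp: fsupp_def)
  then have "(\<lambda>_. 0) \<in> ?O" using z z2 T0 by simp
  then obtain F e where Fe: "finite F" "0 < e"
    "{y \<in> l1_space \<omega> dg1. \<forall>j\<in>F. l1_seminorm \<omega> dg1 j (y - (\<lambda>_. 0)) < e} \<subseteq> ?O"
    using O unfolding l1_open_def by blast
  define K where "K = Max (insert 0 F)"
  have jK: "j \<le> K" if "j \<in> F" for j unfolding K_def using Fe(1) that by simp
  have "(\<Sum>p\<in>fsupp (G \<mu>). norm (G \<mu> p) * real (\<omega> k (dg2 p))) \<le> (2 / e) * real (\<omega> K (dg1 \<mu>))" for \<mu>
  proof -
    define w where "w = real (\<omega> K (dg1 \<mu>))"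
    have w1: "1 \<le> w" unfolding w_def using gf_posr[OF gf] .
    define r where "r = e / (2 * w)"
    have r0: "0 < r" unfolding r_def using Fe(2) w1 by simp
    define c where "c = (\<lambda>t. (of_real r :: 'k) * hbasis \<mu> t)"
    have fc: "fsupp c \<subseteq> {\<mu>}" by (auto simp: c_def fsupp_def hbasis_def)
    have c1: "c \<in> l1_space \<omega> dg1" by (rule l1_space_fin) (use fc finite_subset in blast)
    have "l1_seminorm \<omega> dg1 j (c - (\<lambda>_. 0)) < e" if "j \<in> F" for j
    proof -
      have "l1_seminorm \<omega> dg1 j (c - (\<lambda>_. 0)) = r * real (\<omega> j (dg1 \<mu>))"
        using fc r0 by (subst l1_seminorm_fin[of "{\<mu>}"]) (auto simp: fun_diff_def c_def hbasis_def)
      also have "\<dots> \<le> r * w" unfolding w_def using gf_monor[OF gf jK[OF that]] r0 by simp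
      also have "\<dots> < e" unfolding r_def using Fe(2) w1 by simp
      finally show ?thesis .
    qed
    then have "c \<in> ?O" using Fe(3) c1 by blast
    then have TcW: "l1_seminorm \<omega> dg2 k (T c) < 1" by simp
    have hb: "(hbasis \<mu> :: 'm \<Rightarrow> 'k) \<in> l1_space \<omega> dg1" by (rule l1_space_fin) (simp add: fsupp_hbasis)
    have "T c = T (\<lambda>t. of_real r * hbasis \<mu> t + 0 * hbasis \<mu> t)" by (simp add: c_def)
    also have "\<dots> = (\<lambda>s. of_real r * T (hbasis \<mu>) s + 0 * T (hbasis \<mu>) s)"
      by (rule lin[OF hb hb])
    also have "\<dots> = (\<lambda>s. of_real r * G \<mu> s)"
    proof -
      have "finsupp (hbasis \<mu> :: 'm \<Rightarrow> 'k)" by (rule finsupp_hbasis)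
      with TG have "T (hbasis \<mu>) = lin_ext G (hbasis \<mu> :: 'm \<Rightarrow> 'k)" by blast
      then show ?thesis by (simp add: lin_ext_hbasis)
    qed
    finally have Tc: "T c = (\<lambda>s. of_real r * G \<mu> s)" .
    have "l1_seminorm \<omega> dg2 k (T c) = r * (\<Sum>p\<in>fsupp (G \<mu>). norm (G \<mu> p) * real (\<omega> k (dg2 p)))"
      unfolding Tc using r0 fG
      by (subst l1_seminorm_fin[of "fsupp (G \<mu>)"]) (auto simp: fsupp_def sum_distrib_left norm_mult ac_simps intro!: sum.cong)
    then have "r * (\<Sum>p\<in>fsupp (G \<mu>). norm (G \<mu> p) * real (\<omega> k (dg2 p))) < 1" using TcW by simp
    then have "(\<Sum>p\<in>fsupp (G \<mu>). norm (G \<mu> p) * real (\<omega> k (dg2 p))) < 1 / r"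
      using r0 by (simp add: field_simps)
    also have "1 / r = (2 / e) * w" unfolding r_def using Fe(2) w1 by simp
    finally show ?thesis unfolding w_def by simp
  qed
  then show ?thesis by blast
qed


lemma compS_linf:
  fixes \<iota> :: "'k::real_normed_field \<Rightarrow> 'b::{comm_ring_1,real_normed_algebra_1,banach}"
    and S :: "'m \<Rightarrow> 'm \<Rightarrow> 'k"
  assumes bao: "banach_algebra_over \<iota>" and gf: "growth_family \<omega>"
    and T: "l1_cont_linear \<omega> deg deg T" and TS: "\<forall>x. finsupp x \<longrightarrow> T x = lin_ext S x"
    and fS: "\<And>\<mu>. finite (fsupp (S \<mu>))"
    and \<phi>: "\<phi> \<in> linf \<omega> deg"
  shows "comp_S \<iota> S \<phi> \<in> linf \<omega> deg"
proof -
  obtain k C1 where C1: "C1 \<ge> 0" "\<forall>k'\<ge>k. \<forall>t. norm (\<phi> t) \<le> C1 * real (\<omega> k' (deg t))"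
    using linf_bound[OF gf \<phi>] by blast
  obtain K C where KC: "\<forall>\<mu>. (\<Sum>p\<in>fsupp (S \<mu>). norm (S \<mu> p) * real (\<omega> k (deg p))) \<le> C * real (\<omega> K (deg \<mu>))"
    using ctrl_bound[OF gf T TS fS] by blast
  have "norm (comp_S \<iota> S \<phi> \<mu>) \<le> (C1 * C) * real (\<omega> K (deg \<mu>))" for \<mu>
  proof -
    have "norm (comp_S \<iota> S \<phi> \<mu>) \<le> (\<Sum>\<nu>\<in>fsupp (S \<mu>). norm (\<iota> (S \<mu> \<nu>) * \<phi> \<nu>))"
      unfolding comp_S_def by (rule norm_sum)
    also have "\<dots> \<le> (\<Sum>\<nu>\<in>fsupp (S \<mu>). C1 * (norm (S \<mu> \<nu>) * real (\<omega> k (deg \<nu>))))"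
    proof (rule sum_mono)
      fix \<nu>
      have "norm (\<phi> \<nu>) \<le> C1 * real (\<omega> k (deg \<nu>))" using C1 by blast
      then have "norm (S \<mu> \<nu>) * norm (\<phi> \<nu>) \<le> norm (S \<mu> \<nu>) * (C1 * real (\<omega> k (deg \<nu>)))"
        by (rule mult_left_mono) simp
      then show "norm (\<iota> (S \<mu> \<nu>) * \<phi> \<nu>) \<le> C1 * (norm (S \<mu> \<nu>) * real (\<omega> k (deg \<nu>)))"
        unfolding bao_norm[OF bao] by (simp add: mult.left_commute)
    qed
    also have "\<dots> = C1 * (\<Sum>\<nu>\<in>fsupp (S \<mu>). norm (S \<mu> \<nu>) * real (\<omega> k (deg \<nu>)))"
      by (simp add: sum_distrib_left)
    also have "\<dots> \<le> C1 * (C * real (\<omega> K (deg \<mu>)))"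
      using KC C1 by (intro mult_left_mono) auto
    finally show ?thesis by (simp add: ac_simps)
  qed
  then show ?thesis unfolding linf_iff by blast
qed

lemma hconv_linf:
  fixes \<iota> :: "'k::real_normed_field \<Rightarrow> 'b::{comm_ring_1,real_normed_algebra_1,banach}"
    and Delta :: "'m \<Rightarrow> 'm \<times> 'm \<Rightarrow> 'k"
  assumes bao: "banach_algebra_over \<iota>" and gf: "growth_family \<omega>"
    and T: "l1_cont_linear \<omega> deg (\<lambda>p. deg (fst p) + deg (snd p)) T" and TD: "\<forall>x. finsupp x \<longrightarrow> T x = lin_ext Delta x"
    and fD: "\<And>\<mu>. finite (fsupp (Delta \<mu>))"
    and \<phi>: "\<phi> \<in> linf \<omega> deg" and \<psi>: "\<psi> \<in> linf \<omega> deg"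
  shows "hconv \<iota> Delta \<phi> \<psi> \<in> linf \<omega> deg"
proof -
  obtain k1 C1 where C1: "C1 \<ge> 0" "\<forall>k'\<ge>k1. \<forall>t. norm (\<phi> t) \<le> C1 * real (\<omega> k' (deg t))"
    using linf_bound[OF gf \<phi>] by blast
  obtain k2 C2 where C2: "C2 \<ge> 0" "\<forall>k'\<ge>k2. \<forall>t. norm (\<psi> t) \<le> C2 * real (\<omega> k' (deg t))"
    using linf_bound[OF gf \<psi>] by blast
  define k where "k = max k1 k2"
  have b1: "norm (\<phi> t) \<le> C1 * real (\<omega> k (deg t))" for t using C1 unfolding k_def by auto
  have b2: "norm (\<psi> t) \<le> C2 * real (\<omega> k (deg t))" for t using C2 unfolding k_def by auto
  obtain K C where KC: "\<forall>\<mu>. (\<Sum>p\<in>fsupp (Delta \<mu>). norm (Delta \<mu> p) * real (\<omega> k (deg (fst p) + deg (snd p)))) \<le> C * real (\<omega> K (deg \<mu>))"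
    using ctrl_bound[OF gf T TD fD] by blast
  have "norm (hconv \<iota> Delta \<phi> \<psi> \<mu>) \<le> (C1 * C2 * C) * real (\<omega> K (deg \<mu>))" for \<mu>
  proof -
    have "norm (hconv \<iota> Delta \<phi> \<psi> \<mu>) \<le> (\<Sum>p\<in>fsupp (Delta \<mu>). norm (\<iota> (Delta \<mu> p) * \<phi> (fst p) * \<psi> (snd p)))"
      unfolding hconv_def by (rule norm_sum)
    also have "\<dots> \<le> (\<Sum>p\<in>fsupp (Delta \<mu>). (C1 * C2) * (norm (Delta \<mu> p) * real (\<omega> k (deg (fst p) + deg (snd p)))))"
    proof (rule sum_mono)
      fix p
      have "norm (\<iota> (Delta \<mu> p) * \<phi> (fst p) * \<psi> (snd p)) = norm (Delta \<mu> p) * norm (\<phi> (fst p) * \<psi> (snd p))"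
        by (simp add: bao_norm[OF bao] mult.assoc)
      also have "\<dots> \<le> norm (Delta \<mu> p) * (norm (\<phi> (fst p)) * norm (\<psi> (snd p)))"
        by (intro mult_left_mono norm_mult_ineq) simp
      also have "\<dots> \<le> norm (Delta \<mu> p) * ((C1 * real (\<omega> k (deg (fst p)))) * (C2 * real (\<omega> k (deg (snd p)))))"
        by (intro mult_left_mono mult_mono b1 b2) (use C1 in auto)
      also have "\<dots> = (C1 * C2) * (norm (Delta \<mu> p) * (real (\<omega> k (deg (fst p))) * real (\<omega> k (deg (snd p)))))"
        by (simp add: ac_simps)
      also have "\<dots> \<le> (C1 * C2) * (norm (Delta \<mu> p) * real (\<omega> k (deg (fst p) + deg (snd p))))"
        using C1 C2 gf_subr[OF gf] by (intro mult_left_mono) auto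
      finally show "norm (\<iota> (Delta \<mu> p) * \<phi> (fst p) * \<psi> (snd p)) \<le> \<dots>" .
    qed
    also have "\<dots> = (C1 * C2) * (\<Sum>p\<in>fsupp (Delta \<mu>). norm (Delta \<mu> p) * real (\<omega> k (deg (fst p) + deg (snd p))))"
      by (simp add: sum_distrib_left)
    also have "\<dots> \<le> (C1 * C2) * (C * real (\<omega> K (deg \<mu>)))"
      using KC C1 C2 by (intro mult_left_mono) auto
    finally show ?thesis by (simp add: ac_simps)
  qed
  then show ?thesis unfolding linf_iff by blast
qed

lemma ind_open_crit:
  fixes \<iota> :: "'k::real_normed_field \<Rightarrow> 'b::{comm_ring_1,real_normed_algebra_1,banach}"
    and V :: "('j \<Rightarrow> 'b) set" and dg :: "'j \<Rightarrow> nat"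
  assumes bao: "banach_algebra_over \<iota>" and gf: "growth_family \<omega>"
    and V: "\<And>x. x \<in> V \<Longrightarrow> x \<in> linf \<omega> dg \<and> (\<exists>F \<delta>. finite F \<and> 0 < \<delta> \<and>
       (\<forall>u \<in> linf \<omega> dg. (\<forall>\<mu>\<in>F. norm (u \<mu>) < \<delta>) \<longrightarrow> (\<lambda>t. x t + u t) \<in> V))"
  shows "ind_open \<iota> \<omega> dg V"
  unfolding ind_open_def
proof (intro conjI ballI)
  show "V \<subseteq> linf \<omega> dg" using V by blast
  fix x assume x: "x \<in> V"
  then obtain F \<delta> where F: "finite F" "0 < \<delta>"
    "\<forall>u \<in> linf \<omega> dg. (\<forall>\<mu>\<in>F. norm (u \<mu>) < \<delta>) \<longrightarrow> (\<lambda>t. x t + u t) \<in> V" using V by blast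
  let ?U = "{u \<in> linf \<omega> dg. \<forall>\<mu>\<in>F. norm (u \<mu>) < \<delta>}"
  show "\<exists>U. U \<subseteq> linf \<omega> dg \<and> abs_convex \<iota> U \<and>
        (\<forall>k. \<exists>e>0. {f \<in> linf_step \<omega> dg k. linf_norm \<omega> dg k f < e} \<subseteq> U) \<and>
        (\<forall>u\<in>U. (\<lambda>t. x t + u t) \<in> V)"
  proof (intro exI[of _ ?U] conjI allI)
    show "?U \<subseteq> linf \<omega> dg" by blast
    show "\<forall>u\<in>?U. (\<lambda>t. x t + u t) \<in> V" using F by blast
    show "abs_convex \<iota> ?U"
      unfolding abs_convex_def
    proof (intro ballI allI impI)
      fix u v :: "'j \<Rightarrow> 'b" and a b :: 'k assume u: "u \<in> ?U" and v: "v \<in> ?U" and ab: "norm a + norm b \<le> 1"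
      show "(\<lambda>t. \<iota> a * u t + \<iota> b * v t) \<in> ?U"
      proof (intro CollectI conjI ballI)
        show "(\<lambda>t. \<iota> a * u t + \<iota> b * v t) \<in> linf \<omega> dg" using linf_comb[OF bao gf] u v by blast
        fix \<mu> assume \<mu>: "\<mu> \<in> F"
        let ?m = "max (norm (u \<mu>)) (norm (v \<mu>))"
        have m: "?m < \<delta>" using u v \<mu> by auto
        have "norm (\<iota> a * u \<mu> + \<iota> b * v \<mu>) \<le> norm a * norm (u \<mu>) + norm b * norm (v \<mu>)"
          using norm_triangle_ineq[of "\<iota> a * u \<mu>" "\<iota> b * v \<mu>"] by (simp add: bao_norm[OF bao])
        also have "\<dots> \<le> norm a * ?m + norm b * ?m" by (intro add_mono mult_left_mono) auto
        also have "\<dots> = (norm a + norm b) * ?m" by (simp add: algebra_simps)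
        also have "\<dots> \<le> 1 * ?m" using ab by (intro mult_right_mono) (auto simp: le_max_iff_disj)
        finally show "norm (\<iota> a * u \<mu> + \<iota> b * v \<mu>) < \<delta>" using m by linarith
      qed
    qed
    fix k
    define M where "M = 1 + (\<Sum>\<mu>\<in>F. real (\<omega> k (dg \<mu>)))"
    have M1: "1 \<le> M" unfolding M_def by (simp add: sum_nonneg)
    have wM: "real (\<omega> k (dg \<mu>)) \<le> M" if "\<mu> \<in> F" for \<mu>
    proof -
      have "real (\<omega> k (dg \<mu>)) \<le> (\<Sum>\<mu>\<in>F. real (\<omega> k (dg \<mu>)))"
        using F(1) that by (intro member_le_sum) auto
      then show ?thesis unfolding M_def by simp
    qed
    show "\<exists>e>0. {f \<in> linf_step \<omega> dg k. linf_norm \<omega> dg k f < e} \<subseteq> ?U"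
    proof (intro exI[of _ "\<delta> / M"] conjI subsetI)
      show "0 < \<delta> / M" using F(2) M1 by simp
      fix f assume f: "f \<in> {f \<in> linf_step \<omega> dg k. linf_norm \<omega> dg k f < \<delta> / M}"
      then obtain C where C: "\<forall>t. norm (f t) \<le> C * real (\<omega> k (dg t))" by (auto simp: linf_step_def)
      have fl: "f \<in> linf \<omega> dg" using f by (auto simp: linf_def)
      have bdd: "bdd_above (range (\<lambda>t. norm (f t) / real (\<omega> k (dg t))))"
      proof (rule bdd_aboveI2)
        fix t
        have "0 < real (\<omega> k (dg t))" using gf_posr[OF gf] by (meson less_le_trans zero_less_one)
        then show "norm (f t) / real (\<omega> k (dg t)) \<le> C" using C by (simp add: divide_le_eq)
      qed
      have "norm (f \<mu>) < \<delta>" if "\<mu> \<in> F" for \<mu>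
      proof -
        have w0: "0 < real (\<omega> k (dg \<mu>))" using gf_posr[OF gf] by (meson less_le_trans zero_less_one)
        have "norm (f \<mu>) / real (\<omega> k (dg \<mu>)) \<le> linf_norm \<omega> dg k f"
          unfolding linf_norm_def by (rule cSUP_upper[OF UNIV_I bdd])
        then have "norm (f \<mu>) \<le> linf_norm \<omega> dg k f * real (\<omega> k (dg \<mu>))" using w0 by (simp add: divide_le_eq)
        also have "\<dots> < \<delta> / M * real (\<omega> k (dg \<mu>))" using f w0 by (intro mult_strict_right_mono) auto
        also have "\<dots> \<le> \<delta> / M * M" using wM[OF that] F(2) M1 by (intro mult_left_mono) auto
        also have "\<dots> = \<delta>" using M1 by simp
        finally show ?thesis .
      qed
      then show "f \<in> ?U" using fl by blast
    qed
  qed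
qed


lemma pert_mult:
  fixes P X Y a b c :: "'b::real_normed_algebra"
  assumes d: "norm (P - X * Y) = d" and ab: "norm a < \<delta>" "norm b < \<delta>" "norm c < \<delta>" and d1: "\<delta> \<le> 1"
    and dd: "\<delta> * (2 + norm X + norm Y) \<le> d / 2" and d0: "0 < d"
  shows "P + c \<noteq> (X + a) * (Y + b)"
proof
  assume eq: "P + c = (X + a) * (Y + b)"
  have "P - X * Y = X * b + a * Y + a * b - c" using eq by (simp add: algebra_simps eq_diff_eq)
  then have dn: "d = norm (X * b + a * Y + a * b - c)" using d by simp
  have t1: "norm (X * b + a * Y + a * b - c) \<le> norm (X * b + a * Y + a * b) + norm c" by (rule norm_triangle_ineq4)
  have t2: "norm (X * b + a * Y + a * b) \<le> norm (X * b + a * Y) + norm (a * b)" by (rule norm_triangle_ineq)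
  have t3: "norm (X * b + a * Y) \<le> norm (X * b) + norm (a * Y)" by (rule norm_triangle_ineq)
  have m1: "norm (X * b) \<le> norm X * \<delta>"
    by (rule order_trans[OF norm_mult_ineq mult_left_mono[OF less_imp_le[OF ab(2)] norm_ge_zero]])
  have m2: "norm (a * Y) \<le> \<delta> * norm Y"
    by (rule order_trans[OF norm_mult_ineq mult_right_mono[OF less_imp_le[OF ab(1)] norm_ge_zero]])
  have m3: "norm (a * b) \<le> \<delta> * \<delta>"
    by (rule order_trans[OF norm_mult_ineq mult_mono[OF less_imp_le[OF ab(1)] less_imp_le[OF ab(2)]]])
       (use ab in \<open>auto intro: order_trans[OF norm_ge_zero less_imp_le]\<close>)
  have "0 \<le> \<delta>" using ab(1) norm_ge_zero[of a] by linarith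
  then have "\<delta> * \<delta> \<le> \<delta>" using d1 by (simp add: mult_left_le)
  then have "d \<le> \<delta> * (2 + norm X + norm Y)" using dn t1 t2 t3 m1 m2 m3 ab(3) by (simp add: algebra_simps)
  then show False using dd d0 by linarith
qed

lemma pert_inf:
  fixes P X Y E1 E2 a b c :: "'b::real_normed_algebra"
  assumes d: "norm (P - (X * E2 + E1 * Y)) = d" and ab: "norm a < \<delta>" "norm b < \<delta>" "norm c < \<delta>"
    and dd: "\<delta> * (1 + norm E1 + norm E2) \<le> d / 2" and d0: "0 < d"
  shows "P + c \<noteq> (X + a) * E2 + E1 * (Y + b)"
proof
  assume eq: "P + c = (X + a) * E2 + E1 * (Y + b)"
  have "P - (X * E2 + E1 * Y) = a * E2 + E1 * b - c" using eq by (simp add: algebra_simps eq_diff_eq)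
  then have dn: "d = norm (a * E2 + E1 * b - c)" using d by simp
  have t1: "norm (a * E2 + E1 * b - c) \<le> norm (a * E2 + E1 * b) + norm c" by (rule norm_triangle_ineq4)
  have t2: "norm (a * E2 + E1 * b) \<le> norm (a * E2) + norm (E1 * b)" by (rule norm_triangle_ineq)
  have m1: "norm (a * E2) \<le> \<delta> * norm E2"
    by (rule order_trans[OF norm_mult_ineq mult_right_mono[OF less_imp_le[OF ab(1)] norm_ge_zero]])
  have m2: "norm (E1 * b) \<le> norm E1 * \<delta>"
    by (rule order_trans[OF norm_mult_ineq mult_left_mono[OF less_imp_le[OF ab(2)] norm_ge_zero]])
  have "d \<le> \<delta> * (1 + norm E1 + norm E2)" using dn t1 t2 m1 m2 ab(3) by (simp add: algebra_simps)
  then show False using dd d0 by linarith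
qed


theorem lemma3p10:
  fixes \<iota> :: "'k::real_normed_field \<Rightarrow> 'b::{comm_ring_1,real_normed_algebra_1,banach}"
    and \<omega> :: "nat \<Rightarrow> nat \<Rightarrow> nat"
    and deg :: "'m::monoid_mult \<Rightarrow> nat" and Sig :: "'m set"
    and Delta :: "'m \<Rightarrow> 'm \<times> 'm \<Rightarrow> 'k" and eps :: "'m \<Rightarrow> 'k" and S :: "'m \<Rightarrow> 'm \<Rightarrow> 'k"
  assumes "R_or_C TYPE('k)"
    and "banach_algebra_over \<iota>"
    and "convex_growth_family \<omega>"
    and "combinatorial_hopf deg Sig Delta eps S"
    and "control_pair \<omega> deg Delta S"
  shows
    \<comment> \<open>(1) controlled characters: closed subgroup of the unit group\<close>
    "(\<forall>\<phi>\<in>linf \<omega> deg. hconv \<iota> Delta (hunit \<iota> eps) \<phi> = \<phi> \<and> hconv \<iota> Delta \<phi> (hunit \<iota> eps) = \<phi>)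
     \<and> hunit \<iota> eps \<in> ctr_chars \<iota> \<omega> deg
     \<and> ctr_chars \<iota> \<omega> deg \<subseteq> ctr_units \<iota> \<omega> deg Delta eps
     \<and> (\<forall>\<phi>\<in>ctr_chars \<iota> \<omega> deg. \<forall>\<psi>\<in>ctr_chars \<iota> \<omega> deg. hconv \<iota> Delta \<phi> \<psi> \<in> ctr_chars \<iota> \<omega> deg)
     \<and> (\<forall>\<phi>\<in>ctr_chars \<iota> \<omega> deg. comp_S \<iota> S \<phi> \<in> ctr_chars \<iota> \<omega> deg
           \<and> hconv \<iota> Delta \<phi> (comp_S \<iota> S \<phi>) = hunit \<iota> eps
           \<and> hconv \<iota> Delta (comp_S \<iota> S \<phi>) \<phi> = hunit \<iota> eps)
     \<and> (\<exists>V. ind_open \<iota> \<omega> deg V \<and>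
           ctr_units \<iota> \<omega> deg Delta eps - ctr_chars \<iota> \<omega> deg = ctr_units \<iota> \<omega> deg Delta eps \<inter> V)
     \<comment> \<open>(2) controlled infinitesimal characters: closed Lie subalgebra\<close>
     \<and> (\<lambda>_. 0) \<in> ctr_inf_chars \<iota> \<omega> deg eps
     \<and> (\<forall>\<phi>\<in>ctr_inf_chars \<iota> \<omega> deg eps. \<forall>\<psi>\<in>ctr_inf_chars \<iota> \<omega> deg eps. \<forall>a b.
           (\<lambda>t. \<iota> a * \<phi> t + \<iota> b * \<psi> t) \<in> ctr_inf_chars \<iota> \<omega> deg eps)
     \<and> (\<forall>\<phi>\<in>ctr_inf_chars \<iota> \<omega> deg eps. \<forall>\<psi>\<in>ctr_inf_chars \<iota> \<omega> deg eps.
           (\<lambda>t. hconv \<iota> Delta \<phi> \<psi> t - hconv \<iota> Delta \<psi> \<phi> t) \<in> ctr_inf_chars \<iota> \<omega> deg eps)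
     \<and> ind_open \<iota> \<omega> deg (linf \<omega> deg - ctr_inf_chars \<iota> \<omega> deg eps)"
proof -
  note bao = assms(2)
  have hom: "homk \<iota>" using bao by (rule bao_homk)
  have gf: "growth_family \<omega>" using assms(3) by (simp add: convex_growth_family_def)
  have H: "graded_connected_hopf deg Delta eps S" using assms(4) by (simp add: combinatorial_hopf_def)
  obtain TD where TD: "l1_cont_linear \<omega> deg (\<lambda>p. deg (fst p) + deg (snd p)) TD"
      "\<forall>x. finsupp x \<longrightarrow> TD x = lin_ext Delta x"
    using assms(5) unfolding control_pair_def by blast
  obtain TS where TS: "l1_cont_linear \<omega> deg deg TS" "\<forall>x. finsupp x \<longrightarrow> TS x = lin_ext S x"
    using assms(5) unfolding control_pair_def by blast
  have fD: "\<And>\<mu>. finite (fsupp (Delta \<mu>))" using H_finD[OF hom H] .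
  have fS: "\<And>\<mu>. finite (fsupp (S \<mu>))" using H_finS[OF hom H] .
  have hu: "hunit \<iota> eps = (\<lambda>\<mu>. \<iota> (eps \<mu>))" by (simp add: hunit_def)
  have cl: "\<And>\<phi> \<psi>. \<phi> \<in> linf \<omega> deg \<Longrightarrow> \<psi> \<in> linf \<omega> deg \<Longrightarrow> hconv \<iota> Delta \<phi> \<psi> \<in> linf \<omega> deg"
    by (rule hconv_linf[OF bao gf TD fD])
  have sl: "\<And>\<phi>. \<phi> \<in> linf \<omega> deg \<Longrightarrow> comp_S \<iota> S \<phi> \<in> linf \<omega> deg"
    by (rule compS_linf[OF bao gf TS fS])
  have addl: "(\<lambda>t. x t + u t) \<in> linf \<omega> deg" if "x \<in> linf \<omega> deg" "u \<in> linf \<omega> deg" for x u :: "'m \<Rightarrow> 'b"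
    using linf_comb[OF bao gf that, of 1 1] by (simp add: homk_1[OF hom])
  have chars: "\<And>\<phi>. \<phi> \<in> ctr_chars \<iota> \<omega> deg \<longleftrightarrow> \<phi> \<in> linf \<omega> deg \<and> \<phi> 1 = 1 \<and> (\<forall>\<mu> \<nu>. \<phi> (\<mu> * \<nu>) = \<phi> \<mu> * \<phi> \<nu>)"
    by (simp add: ctr_chars_def char_iff[OF hom])
  have infs: "\<And>\<phi>. \<phi> \<in> ctr_inf_chars \<iota> \<omega> deg eps \<longleftrightarrow> \<phi> \<in> linf \<omega> deg \<and>
      (\<forall>\<mu> \<nu>. \<phi> (\<mu> * \<nu>) = \<phi> \<mu> * \<iota> (eps \<nu>) + \<iota> (eps \<mu>) * \<phi> \<nu>)"
    by (simp add: ctr_inf_chars_def inf_char_iff[OF hom])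
  have P1: "\<forall>\<phi>\<in>linf \<omega> deg. hconv \<iota> Delta (hunit \<iota> eps) \<phi> = \<phi> \<and> hconv \<iota> Delta \<phi> (hunit \<iota> eps) = \<phi>"
    by (simp add: hu unitL[OF hom H] unitR[OF hom H])
  have P2: "hunit \<iota> eps \<in> ctr_chars \<iota> \<omega> deg"
    unfolding chars hu
  proof (intro conjI allI)
    have "norm (\<iota> (eps \<mu>)) \<le> 1 * real (\<omega> 0 (deg \<mu>))" for \<mu>
    proof (cases "deg \<mu> = 0")
      case True
      then have "\<mu> = 1" by (rule H_conn[OF hom H])
      then have "norm (\<iota> (eps \<mu>)) = 1"
        using bao_norm[OF bao, of 1 1] by (simp add: H_eps1[OF hom H] homk_1[OF hom])
      then show ?thesis using gf_posr[OF gf] by simp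
    next
      case False
      then show ?thesis by (simp add: H_epspos[OF hom H] homk_0[OF hom])
    qed
    then show "(\<lambda>\<mu>. \<iota> (eps \<mu>)) \<in> linf \<omega> deg" unfolding linf_iff by blast
    show "\<iota> (eps 1) = 1" by (simp add: H_eps1[OF hom H] homk_1[OF hom])
    fix \<mu> \<nu> show "\<iota> (eps (\<mu> * \<nu>)) = \<iota> (eps \<mu>) * \<iota> (eps \<nu>)"
      by (simp add: H_epsmult[OF hom H] homk_mult[OF hom])
  qed
  have P5: "\<forall>\<phi>\<in>ctr_chars \<iota> \<omega> deg. comp_S \<iota> S \<phi> \<in> ctr_chars \<iota> \<omega> deg
           \<and> hconv \<iota> Delta \<phi> (comp_S \<iota> S \<phi>) = hunit \<iota> eps
           \<and> hconv \<iota> Delta (comp_S \<iota> S \<phi>) \<phi> = hunit \<iota> eps"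
  proof
    fix \<phi> assume "\<phi> \<in> ctr_chars \<iota> \<omega> deg"
    then have \<phi>: "\<phi> \<in> linf \<omega> deg" "\<phi> 1 = 1" "\<And>\<mu> \<nu>. \<phi> (\<mu> * \<nu>) = \<phi> \<mu> * \<phi> \<nu>" unfolding chars by auto
    show "comp_S \<iota> S \<phi> \<in> ctr_chars \<iota> \<omega> deg
           \<and> hconv \<iota> Delta \<phi> (comp_S \<iota> S \<phi>) = hunit \<iota> eps
           \<and> hconv \<iota> Delta (comp_S \<iota> S \<phi>) \<phi> = hunit \<iota> eps"
      unfolding chars hu
      using sl[OF \<phi>(1)] compS_1[OF hom H \<phi>(2,3)] compS_mult[OF hom H \<phi>(2,3)]
        invR[OF hom H \<phi>(2,3)] invL[OF hom H \<phi>(2,3)] by blast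
  qed
  have P3: "ctr_chars \<iota> \<omega> deg \<subseteq> ctr_units \<iota> \<omega> deg Delta eps"
  proof
    fix \<phi> assume \<phi>: "\<phi> \<in> ctr_chars \<iota> \<omega> deg"
    then have "\<phi> \<in> linf \<omega> deg" unfolding chars by blast
    then show "\<phi> \<in> ctr_units \<iota> \<omega> deg Delta eps"
      unfolding ctr_units_def using P5 \<phi> chars by blast
  qed
  have P4: "\<forall>\<phi>\<in>ctr_chars \<iota> \<omega> deg. \<forall>\<psi>\<in>ctr_chars \<iota> \<omega> deg. hconv \<iota> Delta \<phi> \<psi> \<in> ctr_chars \<iota> \<omega> deg"
  proof (intro ballI)
    fix \<phi> \<psi> assume "\<phi> \<in> ctr_chars \<iota> \<omega> deg" "\<psi> \<in> ctr_chars \<iota> \<omega> deg"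
    then have \<phi>: "\<phi> \<in> linf \<omega> deg" "\<phi> 1 = 1" "\<And>\<mu> \<nu>. \<phi> (\<mu> * \<nu>) = \<phi> \<mu> * \<phi> \<nu>"
      and \<psi>: "\<psi> \<in> linf \<omega> deg" "\<psi> 1 = 1" "\<And>\<mu> \<nu>. \<psi> (\<mu> * \<nu>) = \<psi> \<mu> * \<psi> \<nu>" unfolding chars by auto
    show "hconv \<iota> Delta \<phi> \<psi> \<in> ctr_chars \<iota> \<omega> deg"
      unfolding chars using cl[OF \<phi>(1) \<psi>(1)] conv_char[OF hom H \<phi>(2,3) \<psi>(2,3)] by blast
  qed
  have P6: "\<exists>V. ind_open \<iota> \<omega> deg V \<and>
           ctr_units \<iota> \<omega> deg Delta eps - ctr_chars \<iota> \<omega> deg = ctr_units \<iota> \<omega> deg Delta eps \<inter> V"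
  proof (intro exI conjI)
    let ?V = "{\<phi> :: 'm \<Rightarrow> 'b. \<phi> \<in> linf \<omega> deg \<and> \<not> (\<phi> 1 = 1 \<and> (\<forall>\<mu> \<nu>. \<phi> (\<mu> * \<nu>) = \<phi> \<mu> * \<phi> \<nu>))}"
    show "ctr_units \<iota> \<omega> deg Delta eps - ctr_chars \<iota> \<omega> deg = ctr_units \<iota> \<omega> deg Delta eps \<inter> ?V"
      unfolding ctr_units_def using chars by auto
    show "ind_open \<iota> \<omega> deg ?V"
    proof (rule ind_open_crit[OF bao gf])
      fix x assume x: "x \<in> ?V"
      show "x \<in> linf \<omega> deg \<and> (\<exists>F \<delta>. finite F \<and> 0 < \<delta> \<and>
         (\<forall>u \<in> linf \<omega> deg. (\<forall>\<mu>\<in>F. norm (u \<mu>) < \<delta>) \<longrightarrow> (\<lambda>t. x t + u t) \<in> ?V))"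
      proof (cases "x 1 = 1")
        case False
        let ?\<delta> = "norm (x 1 - 1)"
        have "0 < ?\<delta>" using False by simp
        moreover have "(\<lambda>t. x t + u t) \<in> ?V" if u: "u \<in> linf \<omega> deg" "\<forall>\<mu>\<in>{1}. norm (u \<mu>) < ?\<delta>" for u
        proof -
          have "x 1 + u 1 \<noteq> 1"
          proof
            assume "x 1 + u 1 = 1"
            then have "x 1 - 1 = - u 1" by (simp add: algebra_simps eq_diff_eq)
            then show False using u(2) by simp
          qed
          moreover have xl: "x \<in> linf \<omega> deg" using x by simp
          moreover have "(\<lambda>t. x t + u t) \<in> linf \<omega> deg"
          proof -
            have "(\<lambda>t. \<iota> 1 * x t + \<iota> 1 * u t) \<in> linf \<omega> deg"
              by (rule linf_comb[OF bao gf]) (use xl u in auto)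
            then show ?thesis by (simp add: homk_1[OF hom])
          qed
          ultimately show ?thesis by auto
        qed
        ultimately show ?thesis using x by (intro conjI exI[of _ "{1}"] exI[of _ ?\<delta>]) auto
      next
        case True
        then obtain \<mu> \<nu> where ne: "x (\<mu> * \<nu>) \<noteq> x \<mu> * x \<nu>" using x by auto
        define d where "d = norm (x (\<mu> * \<nu>) - x \<mu> * x \<nu>)"
        have d0: "0 < d" using ne by (simp add: d_def)
        define \<delta> where "\<delta> = min 1 (d / (2 * (2 + norm (x \<mu>) + norm (x \<nu>))))"
        have \<delta>0: "0 < \<delta>" using d0 by (simp add: \<delta>_def add_pos_nonneg)
        have \<delta>1: "\<delta> \<le> 1" by (simp add: \<delta>_def)
        have \<delta>d: "\<delta> * (2 + norm (x \<mu>) + norm (x \<nu>)) \<le> d / 2"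
        proof -
          have pos: "0 < 2 + norm (x \<mu>) + norm (x \<nu>)" by (simp add: add_pos_nonneg)
          have "\<delta> \<le> d / (2 * (2 + norm (x \<mu>) + norm (x \<nu>)))" by (simp add: \<delta>_def)
          then have "\<delta> * (2 + norm (x \<mu>) + norm (x \<nu>)) \<le> d / (2 * (2 + norm (x \<mu>) + norm (x \<nu>))) * (2 + norm (x \<mu>) + norm (x \<nu>))"
            using pos by (intro mult_right_mono) auto
          also have "\<dots> = d / 2" using pos by (simp add: field_simps)
          finally show ?thesis .
        qed
        have "(\<lambda>t. x t + u t) \<in> ?V" if u: "u \<in> linf \<omega> deg" "\<forall>\<rho>\<in>{\<mu>, \<nu>, \<mu> * \<nu>}. norm (u \<rho>) < \<delta>" for u
        proof -
          have "x (\<mu> * \<nu>) + u (\<mu> * \<nu>) \<noteq> (x \<mu> + u \<mu>) * (x \<nu> + u \<nu>)"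
            by (rule pert_mult[OF d_def[symmetric] _ _ _ \<delta>1 \<delta>d d0]) (use u in auto)
          moreover have xl: "x \<in> linf \<omega> deg" using x by simp
          moreover have "(\<lambda>t. x t + u t) \<in> linf \<omega> deg"
          proof -
            have "(\<lambda>t. \<iota> 1 * x t + \<iota> 1 * u t) \<in> linf \<omega> deg"
              by (rule linf_comb[OF bao gf]) (use xl u in auto)
            then show ?thesis by (simp add: homk_1[OF hom])
          qed
          ultimately show ?thesis by auto
        qed
        then show ?thesis using x \<delta>0 by (intro conjI exI[of _ "{\<mu>, \<nu>, \<mu> * \<nu>}"] exI[of _ \<delta>]) auto
      qed
    qed
  qed
  have P7: "(\<lambda>_. 0) \<in> ctr_inf_chars \<iota> \<omega> deg eps"
    unfolding infs linf_iff by (auto intro!: exI[of _ 0])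
  have P8: "\<forall>\<phi>\<in>ctr_inf_chars \<iota> \<omega> deg eps. \<forall>\<psi>\<in>ctr_inf_chars \<iota> \<omega> deg eps. \<forall>a b.
           (\<lambda>t. \<iota> a * \<phi> t + \<iota> b * \<psi> t) \<in> ctr_inf_chars \<iota> \<omega> deg eps"
  proof (intro ballI allI)
    fix \<phi> \<psi> a b assume "\<phi> \<in> ctr_inf_chars \<iota> \<omega> deg eps" "\<psi> \<in> ctr_inf_chars \<iota> \<omega> deg eps"
    then have \<phi>: "\<phi> \<in> linf \<omega> deg" "\<And>\<mu> \<nu>. \<phi> (\<mu> * \<nu>) = \<phi> \<mu> * \<iota> (eps \<nu>) + \<iota> (eps \<mu>) * \<phi> \<nu>"
      and \<psi>: "\<psi> \<in> linf \<omega> deg" "\<And>\<mu> \<nu>. \<psi> (\<mu> * \<nu>) = \<psi> \<mu> * \<iota> (eps \<nu>) + \<iota> (eps \<mu>) * \<psi> \<nu>"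
      unfolding infs by auto
    show "(\<lambda>t. \<iota> a * \<phi> t + \<iota> b * \<psi> t) \<in> ctr_inf_chars \<iota> \<omega> deg eps"
      unfolding infs using linf_comb[OF bao gf \<phi>(1) \<psi>(1)] by (simp add: \<phi>(2) \<psi>(2) algebra_simps)
  qed
  have P9: "\<forall>\<phi>\<in>ctr_inf_chars \<iota> \<omega> deg eps. \<forall>\<psi>\<in>ctr_inf_chars \<iota> \<omega> deg eps.
           (\<lambda>t. hconv \<iota> Delta \<phi> \<psi> t - hconv \<iota> Delta \<psi> \<phi> t) \<in> ctr_inf_chars \<iota> \<omega> deg eps"
  proof (intro ballI)
    fix \<phi> \<psi> assume "\<phi> \<in> ctr_inf_chars \<iota> \<omega> deg eps" "\<psi> \<in> ctr_inf_chars \<iota> \<omega> deg eps"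
    then have \<phi>: "\<phi> \<in> linf \<omega> deg" "\<And>\<mu> \<nu>. \<phi> (\<mu> * \<nu>) = \<phi> \<mu> * \<iota> (eps \<nu>) + \<iota> (eps \<mu>) * \<phi> \<nu>"
      and \<psi>: "\<psi> \<in> linf \<omega> deg" "\<And>\<mu> \<nu>. \<psi> (\<mu> * \<nu>) = \<psi> \<mu> * \<iota> (eps \<nu>) + \<iota> (eps \<mu>) * \<psi> \<nu>"
      unfolding infs by auto
    have l: "(\<lambda>t. hconv \<iota> Delta \<phi> \<psi> t - hconv \<iota> Delta \<psi> \<phi> t) \<in> linf \<omega> deg"
      using linf_comb[OF bao gf cl[OF \<phi>(1) \<psi>(1)] cl[OF \<psi>(1) \<phi>(1)], of 1 "-1"]
      by (simp add: homk_1[OF hom] homk_uminus[OF hom])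
    show "(\<lambda>t. hconv \<iota> Delta \<phi> \<psi> t - hconv \<iota> Delta \<psi> \<phi> t) \<in> ctr_inf_chars \<iota> \<omega> deg eps"
      unfolding infs using l
      by (simp add: conv_inf[OF hom H \<phi>(2) \<psi>(2)] conv_inf[OF hom H \<psi>(2) \<phi>(2)] algebra_simps)
  qed
  have P10: "ind_open \<iota> \<omega> deg (linf \<omega> deg - ctr_inf_chars \<iota> \<omega> deg eps)"
  proof (rule ind_open_crit[OF bao gf])
    fix x assume x: "x \<in> linf \<omega> deg - ctr_inf_chars \<iota> \<omega> deg eps"
    then obtain \<mu> \<nu> where ne: "x (\<mu> * \<nu>) \<noteq> x \<mu> * \<iota> (eps \<nu>) + \<iota> (eps \<mu>) * x \<nu>" using infs[of x] by auto
    define d where "d = norm (x (\<mu> * \<nu>) - (x \<mu> * \<iota> (eps \<nu>) + \<iota> (eps \<mu>) * x \<nu>))"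
    have d0: "0 < d" using ne by (simp add: d_def)
    define K where "K = 1 + norm (\<iota> (eps \<mu>)) + norm (\<iota> (eps \<nu>))"
    have K0: "0 < K" by (simp add: K_def add_pos_nonneg)
    define \<delta> where "\<delta> = d / (2 * K)"
    have \<delta>0: "0 < \<delta>" using d0 K0 by (simp add: \<delta>_def)
    have \<delta>d: "\<delta> * K \<le> d / 2" using K0 by (simp add: \<delta>_def)
    have "(\<lambda>t. x t + u t) \<in> linf \<omega> deg - ctr_inf_chars \<iota> \<omega> deg eps"
      if u: "u \<in> linf \<omega> deg" "\<forall>\<rho>\<in>{\<mu>, \<nu>, \<mu> * \<nu>}. norm (u \<rho>) < \<delta>" for u
    proof -
      have "x (\<mu> * \<nu>) + u (\<mu> * \<nu>) \<noteq> (x \<mu> + u \<mu>) * \<iota> (eps \<nu>) + \<iota> (eps \<mu>) * (x \<nu> + u \<nu>)"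
        by (rule pert_inf[OF d_def[symmetric] _ _ _ \<delta>d[unfolded K_def] d0]) (use u in auto)
      moreover have xl: "x \<in> linf \<omega> deg" using x by simp
          moreover have "(\<lambda>t. x t + u t) \<in> linf \<omega> deg"
          proof -
            have "(\<lambda>t. \<iota> 1 * x t + \<iota> 1 * u t) \<in> linf \<omega> deg"
              by (rule linf_comb[OF bao gf]) (use xl u in auto)
            then show ?thesis by (simp add: homk_1[OF hom])
          qed
      ultimately show ?thesis using infs[of "\<lambda>t. x t + u t"] by auto
    qed
    then show "x \<in> linf \<omega> deg \<and> (\<exists>F \<delta>. finite F \<and> 0 < \<delta> \<and>
         (\<forall>u \<in> linf \<omega> deg. (\<forall>\<mu>\<in>F. norm (u \<mu>) < \<delta>) \<longrightarrow> (\<lambda>t. x t + u t) \<in> linf \<omega> deg - ctr_inf_chars \<iota> \<omega> deg eps))"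
      using x \<delta>0 by (intro conjI exI[of _ "{\<mu>, \<nu>, \<mu> * \<nu>}"] exI[of _ \<delta>]) auto
  qed
  show ?thesis using P1 P2 P3 P4 P5 P6 P7 P8 P9 P10 by blast
qed


end
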